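(* Let $\Gamma$ be a distance-regular graph with classical parameters $(D,b,\alpha,\beta)$ such that $b\ge2$, $b-1\ge\alpha\ge1$ and $D\ge3$, geometric with respect to a set $\mathcal C$ of Delsarte cliques (members of $\mathcal C$ are called lines). Let $r=[D]$. Assume that for every vertex $x$ the local graph at $x$ is the $\alpha$-clique extension of a $\frac{\beta}{\alpha}\times r$-grid, and assume $\beta>\alpha r$. Let $M$ be an assembly and $x$ a vertex at distance 2 from $M$. Let $B=\Gamma_2(x)\cap M$ and $L(B)=\{\ell\cap B : \ell\in\mathcal C,\ |\ell\cap B|\ge 2\}$. Then $(B,L(B))$ is a $2$-$(\alpha(b+1)+1,\alpha+1,1)$-design. In particular $\alpha+1$ divides $b(b+1)$.
   Context: Distance-regular graph with intersection numbers $b_i,c_i$, valency $k=b_0$; $\Gamma_i(x)$ is the set of vertices at distance $i$ from $x$. For integer $b\ne1$, $[j]=\frac{b^j-1}{b-1}$. Classical parameters $(D,b,\alpha,\beta)$: diameter $D$, $b_i=([D]-[i])(\beta-\alpha[i])$, $c_i=[i](1+\alpha[i-1])$. A Delsarte clique is a clique with $1+\frac{k}{-\theta_{\min}}$ vertices, $\theta_{\min}$ the smallest adjacency eigenvalue; geometric with respect to $\mathcal C$ means every edge lies in exactly one member of $\mathcal C$. An assembly is a maximal clique of $\Gamma$ not in $\mathcal C$. $d(x,M)=\min_{y\in M}d(x,y)$. The $m\times n$-grid is $K_m\Box K_n$; the $s$-clique extension of $\Delta$ replaces each vertex by an $s$-clique, vertices in distinct cliques adjacent iff the original vertices are adjacent.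 A $t$-$(v,k,\lambda)$-design is a pair $(\mathcal P,\mathcal B)$ with $|\mathcal P|=v$, $\mathcal B$ a set of $k$-subsets of $\mathcal P$, such that every $t$-subset of $\mathcal P$ lies in exactly $\lambda$ members of $\mathcal B$. *)

theory Defs
  imports Complex_Main
begin

text \<open>A finite simple graph is given by a vertex set V and an adjacency predicate E;
  adjacency is always relativised to V.\<close>

definition adj :: "'a set \<Rightarrow> ('a \<Rightarrow> 'a \<Rightarrow> bool) \<Rightarrow> 'a \<Rightarrow> 'a \<Rightarrow> bool" where
  "adj V E x y \<longleftrightarrow> x \<in> V \<and> y \<in> V \<and> E x y"

definition simple_graph :: "'a set \<Rightarrow> ('a \<Rightarrow> 'a \<Rightarrow> bool) \<Rightarrow> bool" where
  "simple_graph V E \<longleftrightarrow> finite V \<and> V \<noteq> {} \<and> (\<forall>x y. E x y \<longrightarrow> E y x) \<and> (\<forall>x. \<not> E x x)"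

definition gdist :: "'a set \<Rightarrow> ('a \<Rightarrow> 'a \<Rightarrow> bool) \<Rightarrow> 'a \<Rightarrow> 'a \<Rightarrow> nat" where
  "gdist V E x y = (LEAST n. (adj V E ^^ n) x y)"

definition connected_graph :: "'a set \<Rightarrow> ('a \<Rightarrow> 'a \<Rightarrow> bool) \<Rightarrow> bool" where
  "connected_graph V E \<longleftrightarrow> (\<forall>x\<in>V. \<forall>y\<in>V. \<exists>n. (adj V E ^^ n) x y)"

definition Gam :: "'a set \<Rightarrow> ('a \<Rightarrow> 'a \<Rightarrow> bool) \<Rightarrow> nat \<Rightarrow> 'a \<Rightarrow> 'a set" where
  "Gam V E i x = {y \<in> V. gdist V E x y = i}"

definition diameter :: "'a set \<Rightarrow> ('a \<Rightarrow> 'a \<Rightarrow> bool) \<Rightarrow> nat" where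
  "diameter V E = Max {gdist V E x y | x y. x \<in> V \<and> y \<in> V}"

definition distance_regular ::
  "'a set \<Rightarrow> ('a \<Rightarrow> 'a \<Rightarrow> bool) \<Rightarrow> nat \<Rightarrow> (nat \<Rightarrow> nat) \<Rightarrow> (nat \<Rightarrow> nat) \<Rightarrow> bool" where
  "distance_regular V E D bs cs \<longleftrightarrow>
     simple_graph V E \<and> connected_graph V E \<and> diameter V E = D \<and>
     (\<forall>x\<in>V. \<forall>y\<in>V. \<forall>i. gdist V E x y = i \<longrightarrow>
        (1 \<le> i \<and> i \<le> D \<longrightarrow> card (Gam V E (i - 1) x \<inter> Gam V E 1 y) = cs i) \<and>
        (i < D \<longrightarrow> card (Gam V E (i + 1) x \<inter> Gam V E 1 y) = bs i))"

text \<open>Gaussian integer [j] = (b^j - 1)/(b - 1) = 1 + b + ... + b^(j-1).\<close>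
definition qint :: "int \<Rightarrow> nat \<Rightarrow> int" where
  "qint b j = (\<Sum>k<j. b ^ k)"

definition classical_parameters ::
  "'a set \<Rightarrow> ('a \<Rightarrow> 'a \<Rightarrow> bool) \<Rightarrow> nat \<Rightarrow> int \<Rightarrow> int \<Rightarrow> int \<Rightarrow> bool" where
  "classical_parameters V E D b \<alpha> \<beta> \<longleftrightarrow>
     (\<exists>bs cs. distance_regular V E D bs cs \<and>
        (\<forall>i<D. int (bs i) = (qint b D - qint b i) * (\<beta> - \<alpha> * qint b i)) \<and>
        (\<forall>i. 1 \<le> i \<and> i \<le> D \<longrightarrow> int (cs i) = qint b i * (1 + \<alpha> * qint b (i - 1))))"

definition adj_eigenvalue :: "'a set \<Rightarrow> ('a \<Rightarrow> 'a \<Rightarrow> bool) \<Rightarrow> real \<Rightarrow> bool" where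
  "adj_eigenvalue V E \<theta> \<longleftrightarrow>
     (\<exists>v :: 'a \<Rightarrow> real. (\<exists>x\<in>V. v x \<noteq> 0) \<and>
        (\<forall>x\<in>V. (\<Sum>y\<in>{y\<in>V. E x y}. v y) = \<theta> * v x))"

definition theta_min :: "'a set \<Rightarrow> ('a \<Rightarrow> 'a \<Rightarrow> bool) \<Rightarrow> real" where
  "theta_min V E = Min {\<theta>. adj_eigenvalue V E \<theta>}"

definition valency :: "'a set \<Rightarrow> ('a \<Rightarrow> 'a \<Rightarrow> bool) \<Rightarrow> 'a \<Rightarrow> nat" where
  "valency V E x = card {y\<in>V. E x y}"

text \<open>Valency k of a regular graph (valency of an arbitrary vertex).\<close>
definition graph_valency :: "'a set \<Rightarrow> ('a \<Rightarrow> 'a \<Rightarrow> bool) \<Rightarrow> nat" where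
  "graph_valency V E = valency V E (SOME x. x \<in> V)"

definition is_clique :: "'a set \<Rightarrow> ('a \<Rightarrow> 'a \<Rightarrow> bool) \<Rightarrow> 'a set \<Rightarrow> bool" where
  "is_clique V E K \<longleftrightarrow> K \<subseteq> V \<and> (\<forall>x\<in>K. \<forall>y\<in>K. x \<noteq> y \<longrightarrow> E x y)"

definition maximal_clique :: "'a set \<Rightarrow> ('a \<Rightarrow> 'a \<Rightarrow> bool) \<Rightarrow> 'a set \<Rightarrow> bool" where
  "maximal_clique V E K \<longleftrightarrow> is_clique V E K \<and> (\<forall>K'. is_clique V E K' \<and> K \<subseteq> K' \<longrightarrow> K' = K)"

definition delsarte_clique :: "'a set \<Rightarrow> ('a \<Rightarrow> 'a \<Rightarrow> bool) \<Rightarrow> nat \<Rightarrow> 'a set \<Rightarrow> bool" where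
  "delsarte_clique V E k K \<longleftrightarrow> is_clique V E K \<and>
     real (card K) = 1 + real k / (- theta_min V E)"

definition geometric_wrt :: "'a set \<Rightarrow> ('a \<Rightarrow> 'a \<Rightarrow> bool) \<Rightarrow> 'a set set \<Rightarrow> bool" where
  "geometric_wrt V E \<C> \<longleftrightarrow> (\<forall>K\<in>\<C>. delsarte_clique V E (graph_valency V E) K) \<and>
     (\<forall>x\<in>V. \<forall>y\<in>V. E x y \<longrightarrow> (\<exists>!K. K \<in> \<C> \<and> x \<in> K \<and> y \<in> K))"

definition assembly :: "'a set \<Rightarrow> ('a \<Rightarrow> 'a \<Rightarrow> bool) \<Rightarrow> 'a set set \<Rightarrow> 'a set \<Rightarrow> bool" where
  "assembly V E \<C> M \<longleftrightarrow> maximal_clique V E M \<and> M \<notin> \<C>"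

definition set_dist :: "'a set \<Rightarrow> ('a \<Rightarrow> 'a \<Rightarrow> bool) \<Rightarrow> 'a \<Rightarrow> 'a set \<Rightarrow> nat" where
  "set_dist V E x M = Min (gdist V E x ` M)"

definition ext_grid_vertices :: "nat \<Rightarrow> nat \<Rightarrow> nat \<Rightarrow> ((nat \<times> nat) \<times> nat) set" where
  "ext_grid_vertices s m n = ({..<m} \<times> {..<n}) \<times> {..<s}"

definition grid_adj :: "nat \<times> nat \<Rightarrow> nat \<times> nat \<Rightarrow> bool" where
  "grid_adj p q \<longleftrightarrow> (fst p = fst q \<and> snd p \<noteq> snd q) \<or> (fst p \<noteq> fst q \<and> snd p = snd q)"

definition ext_grid_adj :: "(nat \<times> nat) \<times> nat \<Rightarrow> (nat \<times> nat) \<times> nat \<Rightarrow> bool" where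
  "ext_grid_adj u w \<longleftrightarrow> u \<noteq> w \<and> (fst u = fst w \<or> grid_adj (fst u) (fst w))"

definition local_is_ext_grid :: "'a set \<Rightarrow> ('a \<Rightarrow> 'a \<Rightarrow> bool) \<Rightarrow> 'a \<Rightarrow> nat \<Rightarrow> nat \<Rightarrow> nat \<Rightarrow> bool" where
  "local_is_ext_grid V E x s m n \<longleftrightarrow>
     (\<exists>f. bij_betw f (Gam V E 1 x) (ext_grid_vertices s m n) \<and>
        (\<forall>u\<in>Gam V E 1 x. \<forall>w\<in>Gam V E 1 x. E u w \<longleftrightarrow> ext_grid_adj (f u) (f w)))"

definition t_design :: "nat \<Rightarrow> nat \<Rightarrow> nat \<Rightarrow> nat \<Rightarrow> 'a set \<Rightarrow> 'a set set \<Rightarrow> bool" where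
  "t_design t v k lam P \<B> \<longleftrightarrow> finite P \<and> card P = v \<and>
     (\<forall>B\<in>\<B>. B \<subseteq> P \<and> card B = k) \<and>
     (\<forall>T. T \<subseteq> P \<and> card T = t \<longrightarrow> card {B\<in>\<B>. T \<subseteq> B} = lam)"

end

theory Submission
  imports Defs "Jordan_Normal_Form.Char_Poly"
begin

locale drg =
  fixes V :: "'a set" and E :: "'a \<Rightarrow> 'a \<Rightarrow> bool" and D :: nat and bs cs :: "nat \<Rightarrow> nat"
  assumes dr: "distance_regular V E D bs cs"
begin

abbreviation N where "N y \<equiv> Gam V E 1 y"

lemma finV: "finite V" and Vne: "V \<noteq> {}" and symE: "E x y \<Longrightarrow> E y x" and irr: "\<not> E x x"
  using dr unfolding distance_regular_def simple_graph_def by auto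

lemma conn: "x \<in> V \<Longrightarrow> y \<in> V \<Longrightarrow> \<exists>n. (adj V E ^^ n) x y"
  using dr unfolding distance_regular_def connected_graph_def by auto

lemma gdist_pow: "x \<in> V \<Longrightarrow> y \<in> V \<Longrightarrow> (adj V E ^^ gdist V E x y) x y"
  unfolding gdist_def using conn by (rule LeastI_ex)

lemma gdist_le: "(adj V E ^^ n) x y \<Longrightarrow> gdist V E x y \<le> n"
  unfolding gdist_def by (rule Least_le)

lemma gdist_self[simp]: "gdist V E x x = 0"
  using gdist_le[of 0 x x] by simp

lemma gdist_0: "x \<in> V \<Longrightarrow> y \<in> V \<Longrightarrow> gdist V E x y = 0 \<longleftrightarrow> x = y"
  using gdist_pow[of x y] by auto

lemma gdist_1: "x \<in> V \<Longrightarrow> y \<in> V \<Longrightarrow> gdist V E x y = 1 \<longleftrightarrow> x \<noteq> y \<and> E x y"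
proof
  assume x: "x \<in> V" "y \<in> V" and g: "gdist V E x y = 1"
  have "adj V E x y" using gdist_pow[OF x] g by (metis One_nat_def relpowp_1)
  moreover have "x \<noteq> y" using g by auto
  ultimately show "x \<noteq> y \<and> E x y" unfolding adj_def by simp
next
  assume x: "x \<in> V" "y \<in> V" and g: "x \<noteq> y \<and> E x y"
  have "adj V E x y" using g x unfolding adj_def by simp
  hence "gdist V E x y \<le> 1" using gdist_le[of 1 x y] by (metis relpowp_1)
  moreover have "gdist V E x y \<noteq> 0" using gdist_0[OF x] g by simp
  ultimately show "gdist V E x y = 1" by simp
qed

lemma gdist_tri: "x \<in> V \<Longrightarrow> z \<in> V \<Longrightarrow> y \<in> V \<Longrightarrow> E z y \<Longrightarrow> gdist V E x y \<le> gdist V E x z + 1"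
proof -
  assume a: "x \<in> V" "z \<in> V" "y \<in> V" "E z y"
  have "(adj V E ^^ Suc (gdist V E x z)) x y"
    using relpowp_Suc_I[OF gdist_pow[of x z]] a unfolding adj_def by auto
  thus ?thesis using gdist_le by fastforce
qed

lemma gdist_tri2: "x \<in> V \<Longrightarrow> z \<in> V \<Longrightarrow> y \<in> V \<Longrightarrow> E z y \<Longrightarrow> gdist V E x z \<le> gdist V E x y + 1"
  using gdist_tri[of x y z] symE by blast

lemma N_eq: "N y = {u \<in> V. y \<noteq> u \<and> E y u}" if "y \<in> V"
  unfolding Gam_def using gdist_1[OF that] by auto

lemma N_eq': "y \<in> V \<Longrightarrow> N y = {u \<in> V. E y u}"
  using N_eq irr by auto

lemma memN: "y \<in> V \<Longrightarrow> u \<in> N y \<longleftrightarrow> u \<in> V \<and> E y u"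
  using N_eq' by auto

lemma Gam_sub: "Gam V E i x \<subseteq> V" unfolding Gam_def by auto

lemma card_N: "y \<in> V \<Longrightarrow> 0 < D \<Longrightarrow> card (N y) = bs 0"
proof -
  assume "y \<in> V" "0 < D"
  hence "card (Gam V E (0 + 1) y \<inter> Gam V E 1 y) = bs 0"
    using dr unfolding distance_regular_def by (metis gdist_self)
  thus ?thesis by simp
qed

lemma card_c: "x \<in> V \<Longrightarrow> y \<in> V \<Longrightarrow> gdist V E x y = i \<Longrightarrow> 1 \<le> i \<Longrightarrow> i \<le> D \<Longrightarrow>
   card (Gam V E (i - 1) x \<inter> N y) = cs i"
  using dr unfolding distance_regular_def by blast

lemma card_b: "x \<in> V \<Longrightarrow> y \<in> V \<Longrightarrow> gdist V E x y = i \<Longrightarrow> i < D \<Longrightarrow>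
   card (Gam V E (i + 1) x \<inter> N y) = bs i"
  using dr unfolding distance_regular_def by blast

end

locale gridloc = drg V E D bs cs for V :: "'a set" and E D bs cs +
  fixes \<alpha> m r :: nat
  assumes loc: "\<forall>y\<in>V. local_is_ext_grid V E y \<alpha> m r"
begin

definition Fm where "Fm y = (SOME f. bij_betw f (N y) (ext_grid_vertices \<alpha> m r) \<and>
        (\<forall>u\<in>N y. \<forall>w\<in>N y. E u w \<longleftrightarrow> ext_grid_adj (f u) (f w)))"
definition cel where "cel y u = fst (Fm y u)"
definition pre where "pre y P = {u \<in> N y. cel y u \<in> P}"
definition row where "row y i = {u \<in> N y. fst (cel y u) = i}"
definition col where "col y j = {u \<in> N y. snd (cel y u) = j}"

lemma Fprop: "y \<in> V \<Longrightarrow> bij_betw (Fm y) (N y) (ext_grid_vertices \<alpha> m r) \<and>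
        (\<forall>u\<in>N y. \<forall>w\<in>N y. E u w \<longleftrightarrow> ext_grid_adj (Fm y u) (Fm y w))"
proof -
  assume y: "y \<in> V"
  have "\<exists>f. bij_betw f (N y) (ext_grid_vertices \<alpha> m r) \<and>
        (\<forall>u\<in>N y. \<forall>w\<in>N y. E u w \<longleftrightarrow> ext_grid_adj (f u) (f w))"
    using loc y unfolding local_is_ext_grid_def by blast
  thus ?thesis unfolding Fm_def by (rule someI_ex)
qed

lemma F_in: "y \<in> V \<Longrightarrow> u \<in> N y \<Longrightarrow> Fm y u \<in> ext_grid_vertices \<alpha> m r"
  using Fprop unfolding bij_betw_def by blast

lemma cel_rng: "y \<in> V \<Longrightarrow> u \<in> N y \<Longrightarrow> fst (cel y u) < m \<and> snd (cel y u) < r"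
  using F_in[of y u] unfolding cel_def ext_grid_vertices_def by (auto simp: mem_Times_iff)

lemma F_inj: "y \<in> V \<Longrightarrow> u \<in> N y \<Longrightarrow> w \<in> N y \<Longrightarrow> Fm y u = Fm y w \<Longrightarrow> u = w"
  using Fprop unfolding bij_betw_def inj_on_def by blast

lemma Fadj: "y \<in> V \<Longrightarrow> u \<in> N y \<Longrightarrow> w \<in> N y \<Longrightarrow>
   E u w \<longleftrightarrow> u \<noteq> w \<and> (fst (cel y u) = fst (cel y w) \<or> snd (cel y u) = snd (cel y w))"
proof -
  assume a: "y \<in> V" "u \<in> N y" "w \<in> N y"
  have "E u w \<longleftrightarrow> ext_grid_adj (Fm y u) (Fm y w)" using Fprop a by blast
  also have "\<dots> \<longleftrightarrow> u \<noteq> w \<and> (cel y u = cel y w \<or> grid_adj (cel y u) (cel y w))"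
    unfolding ext_grid_adj_def cel_def using F_inj[OF a] by auto
  also have "\<dots> \<longleftrightarrow> u \<noteq> w \<and> (fst (cel y u) = fst (cel y w) \<or> snd (cel y u) = snd (cel y w))"
    unfolding grid_adj_def by (auto simp: prod_eq_iff)
  finally show ?thesis .
qed

lemma card_pre: assumes y: "y \<in> V" and P: "P \<subseteq> {..<m} \<times> {..<r}"
  shows "card (pre y P) = card P * \<alpha>"
proof -
  have inj: "inj_on (Fm y) (pre y P)" using Fprop[OF y] unfolding bij_betw_def pre_def
    by (auto intro: inj_on_subset)
  have "Fm y ` pre y P = P \<times> {..<\<alpha>}"
  proof
    show "Fm y ` pre y P \<subseteq> P \<times> {..<\<alpha>}"
    proof
      fix q assume "q \<in> Fm y ` pre y P"
      then obtain u where u: "u \<in> pre y P" "q = Fm y u" by blast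
      have "Fm y u \<in> ext_grid_vertices \<alpha> m r" using F_in[OF y] u unfolding pre_def by blast
      hence "snd q < \<alpha>" using u unfolding ext_grid_vertices_def by (simp add: mem_Times_iff)
      moreover have "fst q \<in> P" using u unfolding pre_def cel_def by simp
      ultimately show "q \<in> P \<times> {..<\<alpha>}" by (simp add: mem_Times_iff)
    qed
  next
    show "P \<times> {..<\<alpha>} \<subseteq> Fm y ` pre y P"
    proof
      fix q assume q: "q \<in> P \<times> {..<\<alpha>}"
      hence "q \<in> ext_grid_vertices \<alpha> m r" using P unfolding ext_grid_vertices_def by (auto simp: mem_Times_iff)
      then obtain u where u: "u \<in> N y" "Fm y u = q" using Fprop[OF y] unfolding bij_betw_def by force
      hence "u \<in> pre y P" using q unfolding pre_def cel_def by (auto simp: mem_Times_iff)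
      thus "q \<in> Fm y ` pre y P" using u by blast
    qed
  qed
  hence "card (pre y P) = card (P \<times> {..<\<alpha>})" using card_image[OF inj] by simp
  thus ?thesis by (simp add: card_cartesian_product)
qed

lemma row_pre: "y \<in> V \<Longrightarrow> row y i = pre y ({i} \<times> {..<r})"
  unfolding row_def pre_def using cel_rng by (auto simp: mem_Times_iff)
lemma col_pre: "y \<in> V \<Longrightarrow> col y j = pre y ({..<m} \<times> {j})"
  unfolding col_def pre_def using cel_rng by (auto simp: mem_Times_iff)

lemma card_row: "y \<in> V \<Longrightarrow> i < m \<Longrightarrow> card (row y i) = r * \<alpha>"
proof -
  assume a: "y \<in> V" "i < m"
  have "card (pre y ({i} \<times> {..<r})) = card ({i} \<times> {..<r}) * \<alpha>" by (rule card_pre) (use a in auto)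
  thus ?thesis using row_pre[OF a(1)] by (simp add: card_cartesian_product)
qed
lemma card_col: "y \<in> V \<Longrightarrow> j < r \<Longrightarrow> card (col y j) = m * \<alpha>"
proof -
  assume a: "y \<in> V" "j < r"
  have "card (pre y ({..<m} \<times> {j})) = card ({..<m} \<times> {j}) * \<alpha>" by (rule card_pre) (use a in auto)
  thus ?thesis using col_pre[OF a(1)] by (simp add: card_cartesian_product)
qed

lemma row_sub: "row y i \<subseteq> N y" unfolding row_def by auto
lemma col_sub: "col y i \<subseteq> N y" unfolding col_def by auto

lemma clique_rc:
  assumes y: "y \<in> V" and S: "S \<subseteq> N y" and cl: "\<forall>u\<in>S. \<forall>w\<in>S. u \<noteq> w \<longrightarrow> E u w" and r0: "0 < r"
  shows "(\<exists>i<m. S \<subseteq> row y i) \<or> (\<exists>j<r. S \<subseteq> col y j)"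
proof (cases "\<exists>u\<in>S. \<exists>w\<in>S. snd (cel y u) \<noteq> snd (cel y w)")
  case False
  hence F: "\<And>u w. u \<in> S \<Longrightarrow> w \<in> S \<Longrightarrow> snd (cel y u) = snd (cel y w)" by blast
  show ?thesis
  proof (cases "S = {}")
    case True thus ?thesis using r0 by blast
  next
    case False
    then obtain u where u: "u \<in> S" by blast
    have "S \<subseteq> col y (snd (cel y u))"
    proof
      fix w assume "w \<in> S" thus "w \<in> col y (snd (cel y u))" using F[OF _ u] S unfolding col_def by blast
    qed
    moreover have "snd (cel y u) < r" using cel_rng[OF y] u S by blast
    ultimately show ?thesis by blast
  qed
next
  case True
  then obtain u w where uw: "u \<in> S" "w \<in> S" "snd (cel y u) \<noteq> snd (cel y w)" by blast
  have uN: "u \<in> N y" and wN: "w \<in> N y" using uw S by auto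
  have "u \<noteq> w" using uw by auto
  hence "E u w" using cl uw by blast
  hence same: "fst (cel y u) = fst (cel y w)" using Fadj[OF y uN wN] uw(3) by blast
  have "S \<subseteq> row y (fst (cel y u))"
  proof
    fix s assume s: "s \<in> S"
    have sN: "s \<in> N y" using s S by blast
    show "s \<in> row y (fst (cel y u))"
    proof (rule ccontr)
      assume "s \<notin> row y (fst (cel y u))"
      hence ns: "fst (cel y s) \<noteq> fst (cel y u)" using sN unfolding row_def by blast
      hence "s \<noteq> u" "s \<noteq> w" using same by auto
      hence "E s u" "E s w" using cl s uw by auto
      hence "snd (cel y s) = snd (cel y u)" "snd (cel y s) = snd (cel y w)"
        using Fadj[OF y sN uN] Fadj[OF y sN wN] ns same by auto
      thus False using uw by simp
    qed
  qed
  moreover have "fst (cel y u) < m" using cel_rng[OF y uN] by blast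
  ultimately show ?thesis by blast
qed

end

locale lines = gridloc V E D bs cs \<alpha> m r for V :: "'a set" and E D bs cs \<alpha> m r +
  assumes \<alpha>1: "1 \<le> \<alpha>" and mr: "r < m" and r0: "0 < r"
begin

definition Ls where "Ls = {K. is_clique V E K \<and> card K = \<alpha> * m + 1}"

lemma finN: "finite (N y)" using finV Gam_sub[of 1 y] by (rule finite_subset[rotated])

lemma notinN: "y \<in> V \<Longrightarrow> y \<notin> N y" using memN irr by blast

lemma col_adj: "y \<in> V \<Longrightarrow> u \<in> col y j \<Longrightarrow> w \<in> col y j \<Longrightarrow> u \<noteq> w \<Longrightarrow> E u w"
  using Fadj unfolding col_def by auto

lemma row_adj: "y \<in> V \<Longrightarrow> u \<in> row y j \<Longrightarrow> w \<in> row y j \<Longrightarrow> u \<noteq> w \<Longrightarrow> E u w"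
  using Fadj unfolding row_def by auto

lemma ins_clique:
  assumes y: "y \<in> V" and S: "S \<subseteq> N y" and cl: "\<And>u w. u \<in> S \<Longrightarrow> w \<in> S \<Longrightarrow> u \<noteq> w \<Longrightarrow> E u w"
  shows "is_clique V E (insert y S)"
  unfolding is_clique_def
proof (intro conjI ballI impI)
  show "insert y S \<subseteq> V" using y S Gam_sub[of 1 y] by blast
next
  fix u w assume u: "u \<in> insert y S" and w: "w \<in> insert y S" and uw: "u \<noteq> w"
  show "E u w"
  proof (cases "u = y")
    case True
    hence "w \<in> S" using w uw by blast
    thus ?thesis using True memN[OF y] S by blast
  next
    case False
    hence uS: "u \<in> S" using u by blast
    show ?thesis
    proof (cases "w = y")
      case True
      thus ?thesis using uS memN[OF y] S symE by blast
    next
      case False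
      thus ?thesis using uS w cl uw by blast
    qed
  qed
qed

lemma col_line: assumes y: "y \<in> V" and j: "j < r"
  shows "insert y (col y j) \<in> Ls"
proof -
  have "is_clique V E (insert y (col y j))"
  proof (rule ins_clique[OF y col_sub])
    fix u w assume "u \<in> col y j" "w \<in> col y j" "u \<noteq> w"
    thus "E u w" by (rule col_adj[OF y])
  qed
  moreover have "y \<notin> col y j" using notinN[OF y] col_sub by blast
  hence "card (insert y (col y j)) = \<alpha> * m + 1"
    using card_col[OF y j] finite_subset[OF col_sub finN] by simp
  ultimately show ?thesis unfolding Ls_def by simp
qed

lemma clique_N: assumes K: "is_clique V E K" and y: "y \<in> K" shows "K - {y} \<subseteq> N y"
proof
  fix u assume u: "u \<in> K - {y}"
  have yV: "y \<in> V" and uV: "u \<in> V" and "E y u" using K y u unfolding is_clique_def by auto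
  thus "u \<in> N y" using memN[OF yV] by blast
qed

lemma clique_rc': "is_clique V E K \<Longrightarrow> y \<in> K \<Longrightarrow>
   (\<exists>i<m. K - {y} \<subseteq> row y i) \<or> (\<exists>j<r. K - {y} \<subseteq> col y j)"
proof -
  assume K: "is_clique V E K" and y: "y \<in> K"
  have yV: "y \<in> V" using K y unfolding is_clique_def by blast
  have "\<forall>u\<in>K - {y}. \<forall>w\<in>K - {y}. u \<noteq> w \<longrightarrow> E u w" using K unfolding is_clique_def by blast
  thus ?thesis using clique_rc[OF yV clique_N[OF K y] _ r0] by blast
qed

lemma clique_card: assumes K: "is_clique V E K" and y: "y \<in> K"
  shows "card K \<le> \<alpha> * m + 1"
proof -
  have yV: "y \<in> V" using K y unfolding is_clique_def by blast
  have fin: "finite (K - {y})" using finite_subset[OF clique_N[OF K y] finN] .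
  have "card (K - {y}) \<le> \<alpha> * m"
  proof -
    from clique_rc'[OF K y] show ?thesis
    proof
      assume "\<exists>i<m. K - {y} \<subseteq> row y i"
      then obtain i where "i < m" "K - {y} \<subseteq> row y i" by blast
      hence "card (K - {y}) \<le> r * \<alpha>"
        using card_mono[OF finite_subset[OF row_sub finN]] card_row[OF yV] by metis
      also have "\<dots> \<le> \<alpha> * m" using mr by simp
      finally show ?thesis .
    next
      assume "\<exists>j<r. K - {y} \<subseteq> col y j"
      then obtain j where "j < r" "K - {y} \<subseteq> col y j" by blast
      thus ?thesis
        using card_mono[OF finite_subset[OF col_sub finN]] card_col[OF yV] by (metis mult.commute)
    qed
  qed
  moreover have "card K = card (K - {y}) + 1" using fin y
    by (metis Suc_eq_plus1 card_Suc_Diff1 finite_Diff2 finite.emptyI finite_insert)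
  ultimately show ?thesis by simp
qed

lemma line_at: assumes K: "K \<in> Ls" and y: "y \<in> K"
  shows "\<exists>j<r. K = insert y (col y j)"
proof -
  have Kc: "is_clique V E K" and cK: "card K = \<alpha> * m + 1" using K unfolding Ls_def by auto
  have yV: "y \<in> V" using Kc y unfolding is_clique_def by blast
  have fin: "finite (K - {y})" using finite_subset[OF clique_N[OF Kc y] finN] .
  have "card K = card (K - {y}) + 1" using fin y
    by (metis Suc_eq_plus1 card_Suc_Diff1 finite_Diff2 finite.emptyI finite_insert)
  hence cS: "card (K - {y}) = \<alpha> * m" using cK by simp
  from clique_rc'[OF Kc y] show ?thesis
  proof
    assume "\<exists>i<m. K - {y} \<subseteq> row y i"
    then obtain i where "i < m" "K - {y} \<subseteq> row y i" by blast
    hence "card (K - {y}) \<le> r * \<alpha>"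
      using card_mono[OF finite_subset[OF row_sub finN]] card_row[OF yV] by metis
    moreover have "r * \<alpha> < \<alpha> * m" using mr \<alpha>1 by simp
    ultimately show ?thesis using cS by simp
  next
    assume "\<exists>j<r. K - {y} \<subseteq> col y j"
    then obtain j where j: "j < r" "K - {y} \<subseteq> col y j" by blast
    have "K - {y} = col y j"
      using card_subset_eq[OF finite_subset[OF col_sub finN] j(2)] card_col[OF yV j(1)] cS
      by (simp add: mult.commute)
    hence "K = insert y (col y j)" using y by blast
    thus ?thesis using j by blast
  qed
qed

lemma col_ne: assumes y: "y \<in> V" and j: "j < r" shows "col y j \<noteq> {}"
proof
  assume "col y j = {}"
  hence "card (col y j) = 0" by simp
  thus False using card_col[OF y j] \<alpha>1 mr by simp
qed

lemma lines_through: assumes y: "y \<in> V"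
  shows "{K \<in> Ls. y \<in> K} = (\<lambda>j. insert y (col y j)) ` {..<r}"
    and "card {K \<in> Ls. y \<in> K} = r"
proof -
  show eq: "{K \<in> Ls. y \<in> K} = (\<lambda>j. insert y (col y j)) ` {..<r}"
    using line_at col_line[OF y] by blast
  have "inj_on (\<lambda>j. insert y (col y j)) {..<r}"
  proof (rule inj_onI)
    fix j1 j2 assume j: "j1 \<in> {..<r}" "j2 \<in> {..<r}" and e: "insert y (col y j1) = insert y (col y j2)"
    have "y \<notin> col y j1" "y \<notin> col y j2" using notinN[OF y] col_sub by blast+
    hence "col y j1 = col y j2" using e by (metis insert_ident)
    moreover obtain u where "u \<in> col y j1" using col_ne[OF y] j by blast
    ultimately show "j1 = j2" unfolding col_def by auto
  qed
  thus "card {K \<in> Ls. y \<in> K} = r" unfolding eq by (simp add: card_image)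
qed

lemma unique_line: assumes u: "u \<in> V" and w: "w \<in> V" and e: "E u w"
  shows "\<exists>!K. K \<in> Ls \<and> u \<in> K \<and> w \<in> K"
proof -
  have wN: "w \<in> N u" using memN[OF u] w e by blast
  define j where "j = snd (cel u w)"
  have j: "j < r" using cel_rng[OF u wN] unfolding j_def by blast
  have wc: "w \<in> col u j" using wN unfolding col_def j_def by blast
  show ?thesis
  proof (rule ex1I[of _ "insert u (col u j)"])
    show "insert u (col u j) \<in> Ls \<and> u \<in> insert u (col u j) \<and> w \<in> insert u (col u j)"
      using col_line[OF u j] wc by blast
  next
    fix K assume K: "K \<in> Ls \<and> u \<in> K \<and> w \<in> K"
    then obtain j' where j': "j' < r" "K = insert u (col u j')" using line_at by blast
    have "w \<noteq> u" using e irr by blast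
    hence "w \<in> col u j'" using K j' by blast
    hence "j' = j" using wc unfolding col_def by auto
    thus "K = insert u (col u j)" using j' by simp
  qed
qed

lemma count_lines: assumes u: "u \<in> V" and w: "w \<in> V"
  shows "card {K \<in> Ls. u \<in> K \<and> w \<in> K} = (if u = w then r else if E u w then 1 else 0)"
proof (cases "u = w")
  case True thus ?thesis using lines_through(2)[OF u] by simp
next
  case False
  show ?thesis
  proof (cases "E u w")
    case True
    then obtain K0 where K0: "K0 \<in> Ls \<and> u \<in> K0 \<and> w \<in> K0"
      and un: "\<And>K. K \<in> Ls \<and> u \<in> K \<and> w \<in> K \<Longrightarrow> K = K0"
      using unique_line[OF u w] by metis
    have "{K \<in> Ls. u \<in> K \<and> w \<in> K} = {K0}" using K0 un by blast
    thus ?thesis using True False by simp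
  next
    case nE: False
    have "{K \<in> Ls. u \<in> K \<and> w \<in> K} = {}"
      using False nE unfolding Ls_def is_clique_def by blast
    thus ?thesis using False nE by (simp only: card.empty if_False)
  qed
qed

lemma Ls_sub: "K \<in> Ls \<Longrightarrow> K \<subseteq> V" unfolding Ls_def is_clique_def by blast

lemma Ls_fin: "finite Ls"
proof -
  have "Ls \<subseteq> Pow V" using Ls_sub by blast
  thus ?thesis using finV by (meson finite_Pow_iff finite_subset)
qed

end

context lines
begin

lemma sq_sum: assumes K: "K \<subseteq> V"
  shows "(\<Sum>u\<in>K. v u)^2 = (\<Sum>u\<in>V. \<Sum>w\<in>V. if u \<in> K \<and> w \<in> K then (v u * v w :: real) else 0)"
proof -
  have "(\<Sum>u\<in>K. v u)^2 = (\<Sum>u\<in>K. \<Sum>w\<in>K. v u * v w)"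
    by (simp add: power2_eq_square sum_product)
  also have "\<dots> = (\<Sum>u\<in>K. \<Sum>w\<in>V. if w \<in> K then v u * v w else 0)"
  proof (rule sum.cong[OF refl])
    fix u show "(\<Sum>w\<in>K. v u * v w) = (\<Sum>w\<in>V. if w \<in> K then v u * v w else 0)"
      using sum.inter_restrict[OF finV, of "\<lambda>w. v u * v w" K] K by (simp add: Int_absorb1)
  qed
  also have "\<dots> = (\<Sum>u\<in>V. if u \<in> K then (\<Sum>w\<in>V. if w \<in> K then v u * v w else 0) else 0)"
    using sum.inter_restrict[OF finV, of "\<lambda>u. \<Sum>w\<in>V. if w \<in> K then v u * v w else 0" K] K
    by (simp add: Int_absorb1)
  also have "\<dots> = (\<Sum>u\<in>V. \<Sum>w\<in>V. if u \<in> K \<and> w \<in> K then v u * v w else 0)"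
    by (rule sum.cong[OF refl]) auto
  finally show ?thesis .
qed

lemma eig_ge: assumes ev: "adj_eigenvalue V E \<theta>" shows "\<theta> \<ge> - real r"
proof -
  obtain v where v0: "\<exists>x\<in>V. v x \<noteq> 0" and evq: "\<And>x. x \<in> V \<Longrightarrow> (\<Sum>y\<in>{y\<in>V. E x y}. v y) = \<theta> * v x"
    using ev unfolding adj_eigenvalue_def by blast
  define Q where "Q = (\<Sum>K\<in>Ls. (\<Sum>u\<in>K. v u)^2)"
  have Q0: "Q \<ge> 0" unfolding Q_def by (rule sum_nonneg) simp
  have "Q = (\<Sum>K\<in>Ls. \<Sum>u\<in>V. \<Sum>w\<in>V. if u \<in> K \<and> w \<in> K then v u * v w else 0)"
    unfolding Q_def by (rule sum.cong[OF refl]) (rule sq_sum[OF Ls_sub])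
  also have "\<dots> = (\<Sum>u\<in>V. \<Sum>K\<in>Ls. \<Sum>w\<in>V. if u \<in> K \<and> w \<in> K then v u * v w else 0)"
    by (rule sum.swap)
  also have "\<dots> = (\<Sum>u\<in>V. \<Sum>w\<in>V. \<Sum>K\<in>Ls. if u \<in> K \<and> w \<in> K then v u * v w else 0)"
    by (rule sum.cong[OF refl]) (rule sum.swap)
  also have "\<dots> = (\<Sum>u\<in>V. \<Sum>w\<in>V. real (card {K \<in> Ls. u \<in> K \<and> w \<in> K}) * (v u * v w))"
  proof (intro sum.cong[OF refl])
    fix u w
    show "(\<Sum>K\<in>Ls. if u \<in> K \<and> w \<in> K then v u * v w else 0) = real (card {K \<in> Ls. u \<in> K \<and> w \<in> K}) * (v u * v w)"
      using sum.inter_filter[OF Ls_fin, of "\<lambda>K. v u * v w" "\<lambda>K. u \<in> K \<and> w \<in> K"] by simp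
  qed
  also have "\<dots> = (\<Sum>u\<in>V. (real r + \<theta>) * (v u)^2)"
  proof (rule sum.cong[OF refl])
    fix u assume u: "u \<in> V"
    have "(\<Sum>w\<in>V. real (card {K \<in> Ls. u \<in> K \<and> w \<in> K}) * (v u * v w))
       = (\<Sum>w\<in>V. (if w = u then real r * (v u * v u) else 0) + (if E u w then v u * v w else 0))"
    proof (rule sum.cong[OF refl])
      fix w assume w: "w \<in> V"
      show "real (card {K \<in> Ls. u \<in> K \<and> w \<in> K}) * (v u * v w) =
         (if w = u then real r * (v u * v u) else 0) + (if E u w then v u * v w else 0)"
        using count_lines[OF u w] irr[of u] by auto
    qed
    also have "\<dots> = real r * (v u * v u) + (\<Sum>w\<in>V. if E u w then v u * v w else 0)"
      using u finV by (simp add: sum.distrib)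
    also have "(\<Sum>w\<in>V. if E u w then v u * v w else 0) = (\<Sum>w\<in>{w\<in>V. E u w}. v u * v w)"
      using sum.inter_filter[OF finV, of "\<lambda>w. v u * v w" "E u"] by simp
    also have "\<dots> = v u * (\<theta> * v u)" using evq[OF u] by (simp add: sum_distrib_left[symmetric])
    finally show "(\<Sum>w\<in>V. real (card {K \<in> Ls. u \<in> K \<and> w \<in> K}) * (v u * v w)) = (real r + \<theta>) * (v u)^2"
      by (simp add: power2_eq_square algebra_simps)
  qed
  also have "\<dots> = (real r + \<theta>) * (\<Sum>u\<in>V. (v u)^2)" by (simp add: sum_distrib_left)
  finally have Qe: "Q = (real r + \<theta>) * (\<Sum>u\<in>V. (v u)^2)" .
  obtain x where x: "x \<in> V" "v x \<noteq> 0" using v0 by blast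
  have "(v x)^2 \<le> (\<Sum>u\<in>V. (v u)^2)"
    using member_le_sum[of x V "\<lambda>u. (v u)^2"] x finV by simp
  moreover have "(v x)^2 > 0" using x by simp
  ultimately have "(\<Sum>u\<in>V. (v u)^2) > 0" by linarith
  hence "real r + \<theta> \<ge> 0" using Q0 Qe by (metis zero_le_mult_iff not_le)
  thus ?thesis by simp
qed

end

lemma eig_finite:
  assumes fin: "finite V"
  shows "finite {\<theta>::real. adj_eigenvalue V E \<theta>}"
proof -
  obtain g where g: "bij_betw g {0..<card V} V" using ex_bij_betw_nat_finite[OF fin] by blast
  define n where "n = card V"
  define A :: "real mat" where "A = mat n n (\<lambda>(i,j). if E (g i) (g j) then 1 else 0)"
  have Ac: "A \<in> carrier_mat n n" unfolding A_def by simp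
  have "{\<theta>::real. adj_eigenvalue V E \<theta>} \<subseteq> {\<theta>. poly (char_poly A) \<theta> = 0}"
  proof
    fix \<theta> assume "\<theta> \<in> {\<theta>::real. adj_eigenvalue V E \<theta>}"
    then obtain v where v0: "\<exists>x\<in>V. v x \<noteq> 0" and ev: "\<forall>x\<in>V. (\<Sum>y\<in>{y\<in>V. E x y}. v y) = \<theta> * v x"
      unfolding adj_eigenvalue_def by auto
    define w where "w = vec n (\<lambda>i. v (g i))"
    have wc: "w \<in> carrier_vec n" unfolding w_def by simp
    have wn: "w \<noteq> 0\<^sub>v n"
    proof
      assume w0: "w = 0\<^sub>v n"
      obtain x where x: "x \<in> V" "v x \<noteq> 0" using v0 by blast
      then obtain i where i: "i < n" "g i = x" using g unfolding n_def bij_betw_def by (metis atLeastLessThan_iff imageE)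
      have "w $ i = v x" unfolding w_def using i by simp
      moreover have "w $ i = 0" using w0 i by simp
      ultimately show False using x by simp
    qed
    have "A *\<^sub>v w = \<theta> \<cdot>\<^sub>v w"
    proof (rule eq_vecI)
      fix i assume i: "i < dim_vec (\<theta> \<cdot>\<^sub>v w)"
      hence i': "i < n" using wc by simp
      have gi: "g i \<in> V" using g i' unfolding n_def bij_betw_def by auto
      have "(A *\<^sub>v w) $ i = (\<Sum>j\<in>{0..<n}. (if E (g i) (g j) then 1 else 0) * v (g j))"
        using i' unfolding A_def w_def by (simp add: mult_mat_vec_def scalar_prod_def)
      also have "\<dots> = (\<Sum>j\<in>{0..<n}. if E (g i) (g j) then v (g j) else 0)"
        by (rule sum.cong) auto
      also have "\<dots> = (\<Sum>j\<in>{j\<in>{0..<n}. E (g i) (g j)}. v (g j))"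
        by (subst sum.inter_filter) auto
      also have "\<dots> = (\<Sum>y\<in>{y\<in>V. E (g i) y}. v y)"
      proof (rule sum.reindex_bij_betw)
        show "bij_betw g {j \<in> {0..<n}. E (g i) (g j)} {y \<in> V. E (g i) y}"
        proof -
          have gi: "inj_on g {0..<n}" "g ` {0..<n} = V" using g unfolding n_def bij_betw_def by auto
          have "g ` {j \<in> {0..<n}. E (g i) (g j)} = {y \<in> V. E (g i) y}"
          proof
            show "g ` {j \<in> {0..<n}. E (g i) (g j)} \<subseteq> {y \<in> V. E (g i) y}" using gi by auto
            show "{y \<in> V. E (g i) y} \<subseteq> g ` {j \<in> {0..<n}. E (g i) (g j)}"
            proof
              fix y assume "y \<in> {y \<in> V. E (g i) y}"
              then obtain j where "j \<in> {0..<n}" "g j = y" "E (g i) y" using gi by auto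
              thus "y \<in> g ` {j \<in> {0..<n}. E (g i) (g j)}" by auto
            qed
          qed
          moreover have "inj_on g {j \<in> {0..<n}. E (g i) (g j)}" using gi(1) by (rule inj_on_subset) auto
          ultimately show ?thesis unfolding bij_betw_def by simp
        qed
      qed
      also have "\<dots> = \<theta> * v (g i)" using ev gi by blast
      finally show "(A *\<^sub>v w) $ i = (\<theta> \<cdot>\<^sub>v w) $ i" using i' unfolding w_def by simp
    qed (use Ac wc in simp)
    hence "eigenvector A w \<theta>" unfolding eigenvector_def using wc wn Ac by simp
    hence "eigenvalue A \<theta>" unfolding eigenvalue_def by blast
    thus "\<theta> \<in> {\<theta>. poly (char_poly A) \<theta> = 0}" using eigenvalue_root_char_poly[OF Ac] by simp
  qed
  moreover have "char_poly A \<noteq> 0" using degree_monic_char_poly[OF Ac] by auto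
  hence "finite {\<theta>. poly (char_poly A) \<theta> = 0}" by (rule poly_roots_finite)
  ultimately show ?thesis by (rule finite_subset)
qed

locale geo = lines V E D bs cs \<alpha> m r for V :: "'a set" and E D bs cs \<alpha> m r +
  fixes Cs :: "'a set set"
  assumes geom: "geometric_wrt V E Cs"
begin

lemma N_all: "y \<in> V \<Longrightarrow> N y = pre y ({..<m} \<times> {..<r})"
  unfolding pre_def using cel_rng by (auto simp: mem_Times_iff)

lemma card_N': "y \<in> V \<Longrightarrow> card (N y) = m * r * \<alpha>"
  using N_all card_pre[of y "{..<m} \<times> {..<r}"] by (simp add: card_cartesian_product)

lemma valency: "graph_valency V E = m * r * \<alpha>"
proof -
  define x where "x = (SOME x. x \<in> V)"
  have x: "x \<in> V" unfolding x_def using Vne by (simp add: some_in_eq)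
  have "graph_valency V E = card {y\<in>V. E x y}" unfolding graph_valency_def valency_def x_def ..
  also have "{y\<in>V. E x y} = N x" using memN[OF x] by blast
  finally show ?thesis using card_N'[OF x] by simp
qed

lemma eig_k: "adj_eigenvalue V E (real (m * r * \<alpha>))"
  unfolding adj_eigenvalue_def
proof (intro exI[of _ "\<lambda>_. 1"] conjI ballI)
  show "\<exists>x\<in>V. (1::real) \<noteq> 0" using Vne by (simp add: ex_in_conv)
next
  fix x assume x: "x \<in> V"
  have "{y\<in>V. E x y} = N x" using memN[OF x] by blast
  thus "(\<Sum>y\<in>{y\<in>V. E x y}. (1::real)) = real (m * r * \<alpha>) * 1" using card_N'[OF x] by simp
qed

lemma theta_min_ge: "theta_min V E \<ge> - real r"
proof -
  have fin: "finite {\<theta>. adj_eigenvalue V E \<theta>}" by (rule eig_finite[OF finV])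
  have ne: "{\<theta>. adj_eigenvalue V E \<theta>} \<noteq> {}" using eig_k by blast
  have "theta_min V E \<in> {\<theta>. adj_eigenvalue V E \<theta>}" unfolding theta_min_def using Min_in[OF fin ne] .
  thus ?thesis using eig_ge by blast
qed

lemma Cs_card: "K \<in> Cs \<Longrightarrow> is_clique V E K \<and> real (card K) = 1 + real (m * r * \<alpha>) / (- theta_min V E)"
  using geom valency unfolding geometric_wrt_def delsarte_clique_def by simp

lemma edge_ex: "\<exists>y u. y \<in> V \<and> u \<in> V \<and> E y u"
proof -
  obtain y where y: "y \<in> V" using Vne by blast
  have "card (N y) > 0" using card_N'[OF y] mr \<alpha>1 r0 by simp
  then obtain u where "u \<in> N y" by (metis card_gt_0_iff ex_in_conv)
  thus ?thesis using memN[OF y] y by blast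
qed

lemma theta_neg: "theta_min V E < 0"
proof (rule ccontr)
  assume "\<not> theta_min V E < 0"
  hence t: "- theta_min V E \<le> 0" by simp
  obtain y u where yu: "y \<in> V" "u \<in> V" "E y u" using edge_ex by blast
  then obtain K where K: "K \<in> Cs" "y \<in> K" "u \<in> K" using geom unfolding geometric_wrt_def by blast
  have Kc: "is_clique V E K" and cK: "real (card K) = 1 + real (m * r * \<alpha>) / (- theta_min V E)"
    using Cs_card[OF K(1)] by auto
  have "real (m * r * \<alpha>) / (- theta_min V E) \<le> 0" using t by (simp add: divide_nonneg_nonpos)
  hence "card K \<le> 1" using cK by simp
  moreover have "finite K" using Kc finV unfolding is_clique_def by (blast intro: finite_subset)
  moreover have "y \<noteq> u" using yu irr by blast
  moreover have "card {y, u} \<le> card K" using K \<open>finite K\<close> by (intro card_mono) auto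
  ultimately show False using \<open>y \<noteq> u\<close> by simp
qed

lemma Cs_Ls: "K \<in> Cs \<Longrightarrow> K \<in> Ls"
proof -
  assume K: "K \<in> Cs"
  have Kc: "is_clique V E K" and cK: "real (card K) = 1 + real (m * r * \<alpha>) / (- theta_min V E)"
    using Cs_card[OF K] by auto
  have t0: "0 < - theta_min V E" using theta_neg by simp
  have tr: "- theta_min V E \<le> real r" using theta_min_ge by simp
  have "real (m * r * \<alpha>) / real r \<le> real (m * r * \<alpha>) / (- theta_min V E)"
  proof (rule divide_left_mono[OF tr])
    show "0 \<le> real (m * r * \<alpha>)" by simp
    have "0 < real r" using r0 by simp
    thus "0 < real r * (- theta_min V E)" using t0 by (rule mult_pos_pos)
  qed
  moreover have "real (m * r * \<alpha>) / real r = real (\<alpha> * m)" using r0 by simp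
  ultimately have ge: "real (card K) \<ge> 1 + real (\<alpha> * m)" using cK by simp
  have "1 + real (\<alpha>*m) \<ge> (1::real)" by simp
  hence "real (card K) \<ge> 1" using ge by linarith
  hence "card K \<ge> 1" by (metis of_nat_1 of_nat_le_iff)
  hence "K \<noteq> {}" by (metis card.empty not_one_le_zero)
  then obtain y where "y \<in> K" by blast
  hence "card K \<le> \<alpha> * m + 1" by (rule clique_card[OF Kc])
  hence "card K = \<alpha> * m + 1" using ge by linarith
  thus "K \<in> Ls" unfolding Ls_def using Kc by simp
qed

lemma Ls_Cs: "K \<in> Ls \<Longrightarrow> K \<in> Cs"
proof -
  assume K: "K \<in> Ls"
  have Kc: "is_clique V E K" and cK: "card K = \<alpha> * m + 1" using K unfolding Ls_def by auto
  have "card K \<ge> 2" using cK \<alpha>1 mr by (simp add: Suc_le_eq)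
  have fK: "finite K" using Kc finV unfolding is_clique_def by (blast intro: finite_subset)
  obtain u where u: "u \<in> K" using \<open>card K \<ge> 2\<close> by (metis card.empty ex_in_conv not_numeral_le_zero)
  have "card (K - {u}) \<ge> 1" using card_Diff_singleton[OF u] \<open>card K \<ge> 2\<close> by simp
  then obtain w where "w \<in> K - {u}" by (metis card.empty ex_in_conv not_one_le_zero)
  hence uw: "u \<in> K" "w \<in> K" "u \<noteq> w" using u by auto
  have uV: "u \<in> V" and wV: "w \<in> V" and e: "E u w" using Kc uw unfolding is_clique_def by auto
  obtain K' where K': "K' \<in> Cs" "u \<in> K'" "w \<in> K'" using geom uV wV e unfolding geometric_wrt_def by blast
  have "K' \<in> Ls" using Cs_Ls[OF K'(1)] .
  hence "K' = K" using unique_line[OF uV wV e] K K' uw by blast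
  thus ?thesis using K' by simp
qed

lemma Cs_eq: "Cs = Ls" using Cs_Ls Ls_Cs by blast

end

locale main = geo V E D bs cs \<alpha> m r Cs for V :: "'a set" and E D bs cs \<alpha> m r Cs +
  fixes b :: nat and M :: "'a set" and x :: 'a
  assumes c2: "cs 2 = (b + 1) * (\<alpha> + 1)"
    and b2: "bs 2 = (r - (b + 1)) * (\<alpha> * m - \<alpha> * (b + 1))"
    and D3: "3 \<le> D" and hb: "b + 2 \<le> r"
    and asm: "assembly V E Cs M" and xV: "x \<in> V" and xM: "set_dist V E x M = 2"
begin

lemma Mcl: "is_clique V E M" and Mmax: "\<And>K. is_clique V E K \<Longrightarrow> M \<subseteq> K \<Longrightarrow> K = M"
  and MnC: "M \<notin> Cs"
  using asm unfolding assembly_def maximal_clique_def by auto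

lemma MV: "M \<subseteq> V" using Mcl unfolding is_clique_def by blast
lemma Mfin: "finite M" using MV finV by (rule finite_subset)

lemma Mne: "M \<noteq> {}"
proof
  assume M0: "M = {}"
  obtain v where v: "v \<in> V" using Vne by blast
  have "is_clique V E {v}" using v unfolding is_clique_def by blast
  hence "{v} = M" using Mmax M0 by blast
  thus False using M0 by blast
qed

lemma Mdist: "u \<in> M \<Longrightarrow> gdist V E x u \<ge> 2"
  using xM Mfin unfolding set_dist_def by (metis Min_le finite_imageI imageI)

lemma Mdist_ex: "\<exists>z\<in>M. gdist V E x z = 2"
proof -
  have "Min (gdist V E x ` M) \<in> gdist V E x ` M" using Mfin Mne by (intro Min_in) auto
  thus ?thesis using xM unfolding set_dist_def by auto
qed

lemma M_row: assumes z: "z \<in> M" shows "\<exists>i0<m. M = insert z (row z i0)"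
proof -
  have zV: "z \<in> V" using z MV by blast
  from clique_rc'[OF Mcl z] show ?thesis
  proof
    assume "\<exists>i<m. M - {z} \<subseteq> row z i"
    then obtain i where i: "i < m" "M - {z} \<subseteq> row z i" by blast
    have "is_clique V E (insert z (row z i))"
    proof (rule ins_clique[OF zV row_sub])
      fix u w assume "u \<in> row z i" "w \<in> row z i" "u \<noteq> w"
      thus "E u w" by (rule row_adj[OF zV])
    qed
    moreover have "M \<subseteq> insert z (row z i)" using i by blast
    ultimately have "insert z (row z i) = M" using Mmax by blast
    thus ?thesis using i by metis
  next
    assume "\<exists>j<r. M - {z} \<subseteq> col z j"
    then obtain j where j: "j < r" "M - {z} \<subseteq> col z j" by blast
    have L: "insert z (col z j) \<in> Ls" using col_line[OF zV j(1)] .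
    hence "is_clique V E (insert z (col z j))" unfolding Ls_def by blast
    moreover have "M \<subseteq> insert z (col z j)" using j by blast
    ultimately have "insert z (col z j) = M" using Mmax by blast
    hence "M \<in> Cs" using L Cs_eq by simp
    thus ?thesis using MnC by blast
  qed
qed

definition B where "B = Gam V E 2 x \<inter> M"
definition Bl where "Bl = {l \<inter> B | l. l \<in> Cs \<and> card (l \<inter> B) \<ge> 2}"

end

locale atz = main V E D bs cs \<alpha> m r Cs b M x
  for V :: "'a set" and E D bs cs \<alpha> m r Cs b M x +
  fixes z i0
  assumes zM: "z \<in> M" and zd: "gdist V E x z = 2" and i0: "i0 < m" and Mz: "M = insert z (row z i0)"
begin

lemma zV: "z \<in> V" using zM MV by blast
lemma xz: "x \<noteq> z" using zd by auto
lemma nExz: "\<not> E x z" using zd gdist_1[OF xV zV] by auto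
lemma xNz: "x \<notin> N z" using memN[OF zV] nExz symE by blast

definition C where "C = Gam V E 1 x \<inter> N z"

lemma memC: "w \<in> C \<longleftrightarrow> w \<in> V \<and> E x w \<and> E z w"
  unfolding C_def using memN[OF xV] memN[OF zV] by blast

lemma C_N: "C \<subseteq> N z" unfolding C_def by blast
lemma finC: "finite C" using finite_subset[OF C_N finN] .

lemma cardC: "card C = (b + 1) * (\<alpha> + 1)"
proof -
  have "card (Gam V E (2 - 1) x \<inter> N z) = cs 2" by (rule card_c[OF xV zV zd]) (use D3 in auto)
  thus ?thesis unfolding C_def using c2 by simp
qed

lemma C_row0: "w \<in> C \<Longrightarrow> fst (cel z w) \<noteq> i0"
proof
  assume w: "w \<in> C" and f: "fst (cel z w) = i0"
  hence "w \<in> row z i0" using C_N unfolding row_def by blast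
  hence "w \<in> M" using Mz by blast
  hence "gdist V E x w \<ge> 2" by (rule Mdist)
  moreover have "gdist V E x w = 1" using w unfolding C_def Gam_def by blast
  ultimately show False by simp
qed

lemma C_col: assumes w: "w \<in> C"
  shows "card {w' \<in> C. snd (cel z w') = snd (cel z w)} = \<alpha> + 1"
proof -
  define j where "j = snd (cel z w)"
  have wN: "w \<in> N z" using w C_N by blast
  have wV: "w \<in> V" and Exw: "E x w" and Ezw: "E z w" using w memC by auto
  have j: "j < r" using cel_rng[OF zV wN] unfolding j_def by blast
  define L where "L = insert z (col z j)"
  have L: "L \<in> Ls" unfolding L_def using col_line[OF zV j] .
  have wL: "w \<in> L" unfolding L_def col_def j_def using wN by blast
  obtain j' where j': "j' < r" "L = insert w (col w j')" using line_at[OF L wL] by blast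
  have xNw: "x \<in> N w" using memN[OF wV] xV Exw symE by blast
  have xL: "x \<notin> L" unfolding L_def using xz xNz col_sub by blast
  hence xc: "snd (cel w x) \<noteq> j'" using j' xNw unfolding col_def by blast
  have eq: "{w' \<in> C. snd (cel z w') = j} = insert w (pre w {(fst (cel w x), j')})"
  proof
    show "{w' \<in> C. snd (cel z w') = j} \<subseteq> insert w (pre w {(fst (cel w x), j')})"
    proof
      fix u assume u: "u \<in> {w' \<in> C. snd (cel z w') = j}"
      hence uN: "u \<in> N z" and uV: "u \<in> V" and Exu: "E x u" using C_N memC by auto
      have "u \<in> L" using u uN unfolding L_def col_def by blast
      show "u \<in> insert w (pre w {(fst (cel w x), j')})"
      proof (cases "u = w")
        case True thus ?thesis by blast
      next
        case False
        hence uc: "u \<in> col w j'" using \<open>u \<in> L\<close> j' by blast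
        hence uNw: "u \<in> N w" using col_sub by blast
        have "snd (cel w u) = j'" using uc unfolding col_def by blast
        hence "fst (cel w x) = fst (cel w u)" using Fadj[OF wV xNw uNw] Exu xc by auto
        hence "cel w u = (fst (cel w x), j')" using \<open>snd (cel w u) = j'\<close> by (simp add: prod_eq_iff)
        thus ?thesis unfolding pre_def using uNw by blast
      qed
    qed
  next
    show "insert w (pre w {(fst (cel w x), j')}) \<subseteq> {w' \<in> C. snd (cel z w') = j}"
    proof
      fix u assume u: "u \<in> insert w (pre w {(fst (cel w x), j')})"
      show "u \<in> {w' \<in> C. snd (cel z w') = j}"
      proof (cases "u = w")
        case True thus ?thesis using w unfolding j_def by blast
      next
        case False
        hence uNw: "u \<in> N w" and cu: "cel w u = (fst (cel w x), j')" using u unfolding pre_def by auto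
        hence uc: "u \<in> col w j'" unfolding col_def by simp
        hence uL: "u \<in> L" using j' by blast
        have "snd (cel w u) = j'" using cu by simp
        hence "u \<noteq> x" using xc by auto
        hence Exu: "E x u" using Fadj[OF wV xNw uNw] cu by auto
        have "u \<noteq> z" using Exu nExz by blast
        hence uc': "u \<in> col z j" using uL unfolding L_def by blast
        hence "u \<in> N z" using col_sub by blast
        hence "u \<in> C" using memC memN[OF zV] Exu by blast
        thus ?thesis using uc' unfolding col_def by blast
      qed
    qed
  qed
  have "fst (cel w x) < m" using cel_rng[OF wV xNw] by blast
  hence "card (pre w {(fst (cel w x), j')}) = \<alpha>" using card_pre[OF wV, of "{(fst (cel w x), j')}"] j' by simp
  moreover have "w \<notin> pre w {(fst (cel w x), j')}" unfolding pre_def using notinN[OF wV] by blast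
  moreover have "finite (pre w {(fst (cel w x), j')})" unfolding pre_def using finN by simp
  ultimately show ?thesis using eq unfolding j_def by simp
qed

end

context atz
begin

lemma C_cell: assumes w: "w \<in> C" and w': "w' \<in> C" and ce: "cel z w = cel z w'"
  shows "w = w'"
proof (rule ccontr)
  assume ne: "w \<noteq> w'"
  define i where "i = fst (cel z w)"
  define j where "j = snd (cel z w)"
  have wN: "w \<in> N z" and w'N: "w' \<in> N z" using w w' C_N by auto
  have wV: "w \<in> V" and Exw: "E x w" using w memC by auto
  have Exw': "E x w'" using w' memC by auto
  have ij: "i < m" "j < r" using cel_rng[OF zV wN] unfolding i_def j_def by auto
  define L where "L = insert z (col z j)"
  define R where "R = insert z (row z i)"
  have L: "L \<in> Ls" unfolding L_def using col_line[OF zV ij(2)] .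
  have R: "is_clique V E R" unfolding R_def
  proof (rule ins_clique[OF zV row_sub])
    fix u v assume "u \<in> row z i" "v \<in> row z i" "u \<noteq> v"
    thus "E u v" by (rule row_adj[OF zV])
  qed
  have wL: "w \<in> L" "w' \<in> L" unfolding L_def col_def j_def using wN w'N ce by auto
  have wR: "w \<in> R" "w' \<in> R" unfolding R_def row_def i_def using wN w'N ce by auto
  obtain j1 where j1: "j1 < r" "L = insert w (col w j1)" using line_at[OF L wL(1)] by blast
  have zw: "z \<noteq> w" using wN notinN[OF zV] by blast
  have zc: "z \<in> col w j1" using j1 zw unfolding L_def by blast
  have w'c: "w' \<in> col w j1" using j1 ne wL by blast
  from clique_rc'[OF R wR(1)] show False
  proof
    assume "\<exists>i''<m. R - {w} \<subseteq> row w i''"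
    then obtain i'' where "R - {w} \<subseteq> row w i''" by blast
    moreover have "z \<in> R - {w}" "w' \<in> R - {w}" using zw ne wR unfolding R_def by auto
    ultimately have "z \<in> row w i''" "w' \<in> row w i''" by blast+
    hence "cel w z = cel w w'" using zc w'c unfolding row_def col_def by (simp add: prod_eq_iff)
    have xNw: "x \<in> N w" using memN[OF wV] xV Exw symE by blast
    have zNw: "z \<in> N w" "w' \<in> N w" using zc w'c col_sub by auto
    have "E x w'" by (rule Exw')
    hence "x \<noteq> w' \<and> (fst (cel w x) = fst (cel w w') \<or> snd (cel w x) = snd (cel w w'))"
      using Fadj[OF wV xNw zNw(2)] by blast
    hence "E x z" using Fadj[OF wV xNw zNw(1)] xz \<open>cel w z = cel w w'\<close> by auto
    thus False using nExz by blast
  next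
    assume "\<exists>j''<r. R - {w} \<subseteq> col w j''"
    then obtain j'' where j'': "R - {w} \<subseteq> col w j''" by blast
    have "z \<in> col w j''" using j'' zw unfolding R_def by blast
    hence "j'' = j1" using zc unfolding col_def by auto
    hence RL: "R \<subseteq> L" using j'' j1 wR by blast
    obtain j2 where j2: "j2 < r" "j2 \<noteq> j"
    proof (cases "j = 0")
      case True thus ?thesis using that[of 1] hb by simp
    next
      case False thus ?thesis using that[of 0] r0 by simp
    qed
    have "card (pre z {(i, j2)}) = \<alpha>" using card_pre[OF zV, of "{(i, j2)}"] ij j2 by simp
    hence "pre z {(i, j2)} \<noteq> {}" using \<alpha>1 by auto
    then obtain u where u: "u \<in> N z" "cel z u = (i, j2)" unfolding pre_def by blast
    hence "u \<in> R" unfolding R_def row_def by simp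
    hence "u \<in> L" using RL by blast
    moreover have "u \<noteq> z" using u notinN[OF zV] by blast
    ultimately have "snd (cel z u) = j" unfolding L_def col_def by blast
    thus False using u j2 by simp
  qed
qed

lemma C_nbr: assumes w: "w \<in> C" shows "card (N w \<inter> C) = 2 * \<alpha>"
proof -
  have wV: "w \<in> V" and Exw: "E x w" and Ezw: "E z w" using w memC by auto
  have xNw: "x \<in> N w" using memN[OF wV] xV Exw symE by blast
  have zNw: "z \<in> N w" using memN[OF wV] zV Ezw symE by blast
  define fx where "fx = fst (cel w x)"
  define sx where "sx = snd (cel w x)"
  define fz where "fz = fst (cel w z)"
  define sz where "sz = snd (cel w z)"
  have nd: "fx \<noteq> fz" "sx \<noteq> sz" using Fadj[OF wV xNw zNw] nExz xz unfolding fx_def fz_def sx_def sz_def by auto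
  have rng: "fx < m" "fz < m" "sx < r" "sz < r" using cel_rng[OF wV xNw] cel_rng[OF wV zNw]
    unfolding fx_def fz_def sx_def sz_def by auto
  have eq: "N w \<inter> C = pre w {(fx, sz), (fz, sx)}"
  proof
    show "N w \<inter> C \<subseteq> pre w {(fx, sz), (fz, sx)}"
    proof
      fix u assume u: "u \<in> N w \<inter> C"
      hence uN: "u \<in> N w" and Exu: "E x u" and Ezu: "E z u" using memC by auto
      have "E u x" "E u z" using Exu Ezu symE by auto
      hence a1: "fst (cel w u) = fx \<or> snd (cel w u) = sx" and a2: "fst (cel w u) = fz \<or> snd (cel w u) = sz"
        using Fadj[OF wV uN xNw] Fadj[OF wV uN zNw] unfolding fx_def fz_def sx_def sz_def by auto
      have "cel w u = (fx, sz) \<or> cel w u = (fz, sx)" using a1 a2 nd by (auto simp: prod_eq_iff)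
      thus "u \<in> pre w {(fx, sz), (fz, sx)}" unfolding pre_def using uN by blast
    qed
  next
    show "pre w {(fx, sz), (fz, sx)} \<subseteq> N w \<inter> C"
    proof
      fix u assume u: "u \<in> pre w {(fx, sz), (fz, sx)}"
      hence uN: "u \<in> N w" and cu: "cel w u = (fx, sz) \<or> cel w u = (fz, sx)" unfolding pre_def by auto
      have ux: "u \<noteq> x" using cu nd unfolding fx_def sx_def by (auto simp: prod_eq_iff)
      have uz: "u \<noteq> z" using cu nd unfolding fz_def sz_def by (auto simp: prod_eq_iff)
      have "E u x" using Fadj[OF wV uN xNw] ux cu unfolding fx_def sx_def by auto
      moreover have "E u z" using Fadj[OF wV uN zNw] uz cu unfolding fz_def sz_def by auto
      moreover have "u \<in> V" using uN Gam_sub by blast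
      ultimately have "u \<in> C" using memC symE by blast
      thus "u \<in> N w \<inter> C" using uN by blast
    qed
  qed
  have "card {(fx, sz), (fz, sx)} = 2" using nd by simp
  moreover have "{(fx, sz), (fz, sx)} \<subseteq> {..<m} \<times> {..<r}" using rng by auto
  ultimately show ?thesis using eq card_pre[OF wV, of "{(fx, sz), (fz, sx)}"] by simp
qed

lemma C_rowc: assumes w: "w \<in> C"
  shows "card {w' \<in> C. fst (cel z w') = fst (cel z w)} = \<alpha> + 1"
proof -
  define Cc where "Cc = {w' \<in> C. snd (cel z w') = snd (cel z w)}"
  define Cr where "Cr = {w' \<in> C. fst (cel z w') = fst (cel z w)}"
  have wN: "w \<in> N z" using w C_N by blast
  have wV: "w \<in> V" using w memC by blast
  have I: "Cc \<inter> Cr = {w}"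
  proof
    show "Cc \<inter> Cr \<subseteq> {w}"
    proof
      fix u assume "u \<in> Cc \<inter> Cr"
      hence "u \<in> C" "cel z u = cel z w" unfolding Cc_def Cr_def by (auto simp: prod_eq_iff)
      thus "u \<in> {w}" using C_cell[OF w, of u] by simp
    qed
    show "{w} \<subseteq> Cc \<inter> Cr" using w unfolding Cc_def Cr_def by auto
  qed
  have U: "N w \<inter> C = (Cc \<union> Cr) - {w}"
  proof
    show "N w \<inter> C \<subseteq> (Cc \<union> Cr) - {w}"
    proof
      fix u assume u: "u \<in> N w \<inter> C"
      hence uC: "u \<in> C" and uN: "u \<in> N z" using C_N by auto
      have "E w u" using u memN[OF wV] by blast
      hence "u \<noteq> w \<and> (fst (cel z w) = fst (cel z u) \<or> snd (cel z w) = snd (cel z u))"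
        using Fadj[OF zV wN uN] by blast
      thus "u \<in> (Cc \<union> Cr) - {w}" using uC unfolding Cc_def Cr_def by auto
    qed
  next
    show "(Cc \<union> Cr) - {w} \<subseteq> N w \<inter> C"
    proof
      fix u assume u: "u \<in> (Cc \<union> Cr) - {w}"
      hence uC: "u \<in> C" and uN: "u \<in> N z" using C_N unfolding Cc_def Cr_def by auto
      have "u \<noteq> w \<and> (fst (cel z w) = fst (cel z u) \<or> snd (cel z w) = snd (cel z u))"
        using u unfolding Cc_def Cr_def by auto
      hence "E w u" using Fadj[OF zV wN uN] by blast
      hence "u \<in> N w" using memN[OF wV] uC memC by blast
      thus "u \<in> N w \<inter> C" using uC by blast
    qed
  qed
  have fc: "finite Cc" "finite Cr" using finC unfolding Cc_def Cr_def by auto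
  have wU: "w \<in> Cc \<union> Cr" using I by blast
  have "card (N w \<inter> C) = card (Cc \<union> Cr) - 1" using U wU fc by (simp add: card_Diff_singleton)
  moreover have "card (Cc \<union> Cr) + card (Cc \<inter> Cr) = card Cc + card Cr" using card_Un_Int[OF fc] by simp
  moreover have "card Cc = \<alpha> + 1" unfolding Cc_def by (rule C_col[OF w])
  ultimately have "2 * \<alpha> = \<alpha> + 1 + card Cr - 1 - 1" using C_nbr[OF w] I by simp
  thus ?thesis unfolding Cr_def using \<alpha>1 by arith
qed

lemma card_fibres: assumes fin: "finite A" and h: "\<And>a. a \<in> A \<Longrightarrow> card {a' \<in> A. f a' = f a} = c"
  shows "card A = card (f ` A) * c"
proof -
  have "card A = (\<Sum>y\<in>f ` A. card {a \<in> A. f a = y})"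
    using sum.image_gen[OF fin, of "\<lambda>_. (1::nat)" f] by simp
  also have "\<dots> = (\<Sum>y\<in>f ` A. c)" by (rule sum.cong[OF refl]) (use h in auto)
  finally show ?thesis by simp
qed

definition CS where "CS = (\<lambda>w. snd (cel z w)) ` C"
definition RS where "RS = (\<lambda>w. fst (cel z w)) ` C"

lemma card_CS: "card CS = b + 1"
proof -
  have "card C = card CS * (\<alpha> + 1)" unfolding CS_def by (rule card_fibres[OF finC C_col])
  hence "(b + 1) * (\<alpha> + 1) = card CS * (\<alpha> + 1)" using cardC by simp
  thus ?thesis using mult_right_cancel[of "\<alpha> + 1" "b + 1" "card CS"] by simp
qed

lemma card_RS: "card RS = b + 1"
proof -
  have "card C = card RS * (\<alpha> + 1)" unfolding RS_def by (rule card_fibres[OF finC C_rowc])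
  hence "(b + 1) * (\<alpha> + 1) = card RS * (\<alpha> + 1)" using cardC by simp
  thus ?thesis using mult_right_cancel[of "\<alpha> + 1" "b + 1" "card RS"] by simp
qed

lemma CS_sub: "CS \<subseteq> {..<r}" unfolding CS_def using cel_rng[OF zV] C_N by auto
lemma RS_sub: "RS \<subseteq> {..<m}" unfolding RS_def using cel_rng[OF zV] C_N by auto
lemma i0_RS: "i0 \<notin> RS" unfolding RS_def using C_row0 by auto

end

context atz
begin

definition S where "S = Gam V E 2 x \<inter> N z"

lemma memGam: "u \<in> Gam V E i x \<longleftrightarrow> u \<in> V \<and> gdist V E x u = i" unfolding Gam_def by blast

lemma N_split: "N z = C \<union> S \<union> (Gam V E 3 x \<inter> N z)"
proof
  show "N z \<subseteq> C \<union> S \<union> (Gam V E 3 x \<inter> N z)"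
  proof
    fix u assume u: "u \<in> N z"
    hence uV: "u \<in> V" and e: "E z u" using memN[OF zV] by auto
    have "gdist V E x u \<le> 3" using gdist_tri[OF xV zV uV e] zd by simp
    moreover have "2 \<le> gdist V E x u + 1" using gdist_tri2[OF xV zV uV e] zd by simp
    ultimately have "gdist V E x u = 1 \<or> gdist V E x u = 2 \<or> gdist V E x u = 3" by auto
    thus "u \<in> C \<union> S \<union> (Gam V E 3 x \<inter> N z)" unfolding C_def S_def using u uV memGam by auto
  qed
qed (auto simp: C_def S_def)

lemma card_S: "card S + card C + bs 2 = m * r * \<alpha>"
proof -
  have f: "finite C" "finite S" "finite (Gam V E 3 x \<inter> N z)"
    using finC finN unfolding S_def by auto
  have d1: "C \<inter> S = {}" unfolding C_def S_def Gam_def by auto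
  have d2: "(C \<union> S) \<inter> (Gam V E 3 x \<inter> N z) = {}" unfolding C_def S_def Gam_def by auto
  have "card (N z) = card (C \<union> S) + card (Gam V E 3 x \<inter> N z)"
    using N_split card_Un_disjoint[OF _ f(3) d2] f by simp
  also have "card (C \<union> S) = card C + card S" using card_Un_disjoint[OF f(1,2) d1] .
  also have "card (Gam V E 3 x \<inter> N z) = bs 2"
    using card_b[OF xV zV zd] D3 by simp
  finally show ?thesis using card_N'[OF zV] by simp
qed

definition T1 where "T1 = pre z ({..<m} \<times> CS) - C"
definition T2 where "T2 = pre z (RS \<times> ({..<r} - CS))"

lemma C_pre: "C \<subseteq> pre z ({..<m} \<times> CS)"
  unfolding pre_def CS_def using C_N cel_rng[OF zV] by (auto simp: mem_Times_iff)

lemma card_T1: "card T1 + card C = m * (b + 1) * \<alpha>"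
proof -
  have "card (pre z ({..<m} \<times> CS)) = m * (b + 1) * \<alpha>"
    using card_pre[OF zV, of "{..<m} \<times> CS"] CS_sub card_CS by (auto simp: card_cartesian_product)
  moreover have "finite (pre z ({..<m} \<times> CS))" unfolding pre_def using finN by simp
  ultimately show ?thesis unfolding T1_def using card_Diff_subset[OF finite_subset[OF C_pre] C_pre] C_pre
    by (metis card_mono le_add_diff_inverse2)
qed

lemma card_T2: "card T2 = (b + 1) * (r - (b + 1)) * \<alpha>"
proof -
  have "card ({..<r} - CS) = r - (b + 1)"
    using card_Diff_subset[OF finite_subset[OF CS_sub] CS_sub] card_CS by simp
  hence "card (RS \<times> ({..<r} - CS)) = (b + 1) * (r - (b + 1))"
    using card_RS by (simp add: card_cartesian_product)
  moreover have "RS \<times> ({..<r} - CS) \<subseteq> {..<m} \<times> {..<r}" using RS_sub by auto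
  ultimately show ?thesis unfolding T2_def using card_pre[OF zV] by simp
qed

lemma dist2: assumes u: "u \<in> N z" and uC: "u \<notin> C" and w: "w \<in> C" and e: "E w u"
  shows "u \<in> S"
proof -
  have uV: "u \<in> V" using u Gam_sub by blast
  have wV: "w \<in> V" and Exw: "E x w" using w memC by auto
  have "gdist V E x w = 1" using gdist_1[OF xV wV] Exw irr by auto
  hence le: "gdist V E x u \<le> 2" using gdist_tri[OF xV wV uV e] by simp
  have "u \<noteq> x" using u xNz by blast
  hence "gdist V E x u \<noteq> 0" using gdist_0[OF xV uV] by auto
  moreover have "gdist V E x u \<noteq> 1"
  proof
    assume "gdist V E x u = 1"
    hence "u \<in> C" unfolding C_def using u uV memGam by blast
    thus False using uC by blast
  qed
  ultimately have "gdist V E x u = 2" using le by linarith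
  thus ?thesis unfolding S_def using u uV memGam by blast
qed

lemma T1_S: "T1 \<subseteq> S"
proof
  fix u assume u: "u \<in> T1"
  hence uN: "u \<in> N z" and uC: "u \<notin> C" and cs: "snd (cel z u) \<in> CS" unfolding T1_def pre_def by (auto simp: mem_Times_iff)
  then obtain w where w: "w \<in> C" "snd (cel z w) = snd (cel z u)" unfolding CS_def by auto
  have wN: "w \<in> N z" using w C_N by blast
  have "w \<noteq> u" using w uC by blast
  hence "E w u" using Fadj[OF zV wN uN] w by blast
  thus "u \<in> S" by (rule dist2[OF uN uC w(1)])
qed

lemma T2_S: "T2 \<subseteq> S"
proof
  fix u assume u: "u \<in> T2"
  hence uN: "u \<in> N z" and cs: "snd (cel z u) \<notin> CS" and rs: "fst (cel z u) \<in> RS"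
    unfolding T2_def pre_def by (auto simp: mem_Times_iff)
  have uC: "u \<notin> C" using cs unfolding CS_def by blast
  obtain w where w: "w \<in> C" "fst (cel z w) = fst (cel z u)" using rs unfolding RS_def by auto
  have wN: "w \<in> N z" using w C_N by blast
  have "w \<noteq> u" using w uC by blast
  hence "E w u" using Fadj[OF zV wN uN] w by blast
  thus "u \<in> S" by (rule dist2[OF uN uC w(1)])
qed

lemma S_eq: "S = T1 \<union> T2"
proof -
  have fS: "finite S" unfolding S_def using finN by simp
  have d: "T1 \<inter> T2 = {}" unfolding T1_def T2_def pre_def by (auto simp: mem_Times_iff)
  have f12: "finite T1" "finite T2" using finite_subset[OF T1_S fS] finite_subset[OF T2_S fS] .
  define t where "t = r - (b + 1)"
  have t: "r = b + 1 + t" unfolding t_def using hb by simp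
  define s where "s = m - (b + 1)"
  have s: "m = b + 1 + s" unfolding s_def using hb mr by simp
  have e1: "card S + (b + 1) * (\<alpha> + 1) + t * (\<alpha> * s) = m * r * \<alpha>"
    using card_S cardC b2 t s by (simp add: algebra_simps diff_mult_distrib2)
  have e2: "card T1 + (b + 1) * (\<alpha> + 1) = m * (b + 1) * \<alpha>" using card_T1 cardC by simp
  have e3: "card T2 = (b + 1) * t * \<alpha>" using card_T2 t by simp
  have "card S = card T1 + card T2"
  proof -
    have "card S + (b + 1) * (\<alpha> + 1) + t * (\<alpha> * s) = card T1 + card T2 + (b + 1) * (\<alpha> + 1) + t * (\<alpha> * s)"
      using e1 e2 e3 unfolding s t by (simp add: algebra_simps)
    thus ?thesis by simp
  qed
  also have "\<dots> = card (T1 \<union> T2)" using card_Un_disjoint[OF f12 d] by simp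
  finally have "card (T1 \<union> T2) = card S" by simp
  moreover have "T1 \<union> T2 \<subseteq> S" using T1_S T2_S by blast
  ultimately show ?thesis using card_subset_eq[OF fS] by blast
qed

end

context atz
begin

lemma zB: "z \<in> Gam V E 2 x" using zV zd memGam by blast

lemma row_i0_N: "row z i0 \<subseteq> N z" by (rule row_sub)

lemma B_eq: "B = insert z (pre z ({i0} \<times> CS))"
proof
  show "B \<subseteq> insert z (pre z ({i0} \<times> CS))"
  proof
    fix u assume u: "u \<in> B"
    hence uM: "u \<in> M" and u2: "u \<in> Gam V E 2 x" unfolding B_def by auto
    show "u \<in> insert z (pre z ({i0} \<times> CS))"
    proof (cases "u = z")
      case True thus ?thesis by blast
    next
      case False
      hence ur: "u \<in> row z i0" using uM Mz by blast
      hence uN: "u \<in> N z" and f: "fst (cel z u) = i0" unfolding row_def by auto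
      have "u \<in> S" unfolding S_def using uN u2 by blast
      hence "u \<in> T1 \<or> u \<in> T2" using S_eq by blast
      moreover have "u \<notin> T2" unfolding T2_def pre_def using f i0_RS by (auto simp: mem_Times_iff)
      ultimately have "u \<in> T1" by blast
      hence "snd (cel z u) \<in> CS" unfolding T1_def pre_def by (auto simp: mem_Times_iff)
      thus ?thesis unfolding pre_def using uN f by (auto simp: mem_Times_iff)
    qed
  qed
next
  show "insert z (pre z ({i0} \<times> CS)) \<subseteq> B"
  proof
    fix u assume u: "u \<in> insert z (pre z ({i0} \<times> CS))"
    show "u \<in> B"
    proof (cases "u = z")
      case True thus ?thesis unfolding B_def using zB zM by blast
    next
      case False
      hence uN: "u \<in> N z" and f: "fst (cel z u) = i0" and cs: "snd (cel z u) \<in> CS"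
        using u unfolding pre_def by (auto simp: mem_Times_iff)
      have uM: "u \<in> M" using uN f Mz unfolding row_def by blast
      have "u \<notin> C" using C_row0 f by blast
      hence "u \<in> T1" unfolding T1_def pre_def using uN cel_rng[OF zV uN] cs by (auto simp: mem_Times_iff)
      hence "u \<in> S" using T1_S by blast
      thus ?thesis unfolding B_def S_def using uM by blast
    qed
  qed
qed

lemma pre_fin: "finite (pre z P)" unfolding pre_def using finN by simp

lemma card_B: "card B = \<alpha> * (b + 1) + 1"
proof -
  have "card (pre z ({i0} \<times> CS)) = (b + 1) * \<alpha>"
    using card_pre[OF zV, of "{i0} \<times> CS"] CS_sub i0 card_CS by (auto simp: card_cartesian_product)
  moreover have "z \<notin> pre z ({i0} \<times> CS)" unfolding pre_def using notinN[OF zV] by blast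
  ultimately show ?thesis using B_eq pre_fin by simp
qed

lemma line_B: assumes j: "j < r"
  shows "insert z (col z j) \<inter> B = (if j \<in> CS then insert z (pre z {(i0, j)}) else {z})"
proof -
  have "insert z (col z j) \<inter> B = insert z (col z j \<inter> pre z ({i0} \<times> CS))"
    using B_eq by blast
  also have "col z j \<inter> pre z ({i0} \<times> CS) = (if j \<in> CS then pre z {(i0, j)} else {})"
    unfolding col_def pre_def by (auto simp: mem_Times_iff prod_eq_iff)
  finally show ?thesis by simp
qed

lemma card_cell: "j < r \<Longrightarrow> card (insert z (pre z {(i0, j)})) = \<alpha> + 1"
proof -
  assume j: "j < r"
  have "card (pre z {(i0, j)}) = \<alpha>" using card_pre[OF zV, of "{(i0, j)}"] j i0 by simp
  moreover have "z \<notin> pre z {(i0, j)}" unfolding pre_def using notinN[OF zV] by blast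
  ultimately show ?thesis using pre_fin by simp
qed

lemma blocks_z: "{X \<in> Bl. z \<in> X} = (\<lambda>j. insert z (pre z {(i0, j)})) ` CS"
proof
  show "{X \<in> Bl. z \<in> X} \<subseteq> (\<lambda>j. insert z (pre z {(i0, j)})) ` CS"
  proof
    fix X assume X: "X \<in> {X \<in> Bl. z \<in> X}"
    have "\<exists>l. X = l \<inter> B \<and> l \<in> Cs \<and> 2 \<le> card (l \<inter> B)" using X unfolding Bl_def by simp
    then obtain l where l: "X = l \<inter> B" "l \<in> Cs" "card (l \<inter> B) \<ge> 2" by blast
    have "z \<in> l" using X l(1) by blast
    have "l \<in> Ls" using l(2) Cs_eq by simp
    then obtain j where j: "j < r" "l = insert z (col z j)" using line_at \<open>z \<in> l\<close> by blast
    have "j \<in> CS"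
    proof (rule ccontr)
      assume "j \<notin> CS"
      hence "l \<inter> B = {z}" using line_B[OF j(1)] j(2) by simp
      thus False using l(3) by simp
    qed
    hence "X = insert z (pre z {(i0, j)})" using line_B[OF j(1)] j(2) l(1) by simp
    thus "X \<in> (\<lambda>j. insert z (pre z {(i0, j)})) ` CS" using \<open>j \<in> CS\<close> by blast
  qed
next
  show "(\<lambda>j. insert z (pre z {(i0, j)})) ` CS \<subseteq> {X \<in> Bl. z \<in> X}"
  proof
    fix X assume "X \<in> (\<lambda>j. insert z (pre z {(i0, j)})) ` CS"
    then obtain j where j: "j \<in> CS" "X = insert z (pre z {(i0, j)})" by blast
    have jr: "j < r" using j CS_sub by blast
    have l: "insert z (col z j) \<in> Cs" using col_line[OF zV jr] Cs_eq by simp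
    have e: "insert z (col z j) \<inter> B = X" using line_B[OF jr] j by simp
    have "card X \<ge> 2" using card_cell[OF jr] j \<alpha>1 by simp
    hence "\<exists>l. X = l \<inter> B \<and> l \<in> Cs \<and> 2 \<le> card (l \<inter> B)" using l e by (intro exI[of _ "insert z (col z j)"]) simp
    hence "X \<in> Bl" unfolding Bl_def by simp
    thus "X \<in> {X \<in> Bl. z \<in> X}" using j by blast
  qed
qed

lemma card_blocks_z: "card {X \<in> Bl. z \<in> X} = b + 1"
proof -
  have "inj_on (\<lambda>j. insert z (pre z {(i0, j)})) CS"
  proof (rule inj_onI)
    fix j1 j2 assume j: "j1 \<in> CS" "j2 \<in> CS" and e: "insert z (pre z {(i0, j1)}) = insert z (pre z {(i0, j2)})"
    have "card (pre z {(i0, j1)}) = \<alpha>" using card_pre[OF zV, of "{(i0, j1)}"] j CS_sub i0 by auto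
    hence "pre z {(i0, j1)} \<noteq> {}" using \<alpha>1 by auto
    then obtain u where u: "u \<in> pre z {(i0, j1)}" by blast
    hence "u \<noteq> z" unfolding pre_def using notinN[OF zV] by blast
    hence "u \<in> pre z {(i0, j2)}" using u e by blast
    thus "j1 = j2" using u unfolding pre_def by auto
  qed
  thus ?thesis using blocks_z card_CS by (simp add: card_image)
qed

lemma block_card: "X \<in> Bl \<Longrightarrow> z \<in> X \<Longrightarrow> card X = \<alpha> + 1"
proof -
  assume "X \<in> Bl" "z \<in> X"
  hence "X \<in> (\<lambda>j. insert z (pre z {(i0, j)})) ` CS" using blocks_z by blast
  then obtain j where "j \<in> CS" "X = insert z (pre z {(i0, j)})" by blast
  thus ?thesis using card_cell CS_sub by blast
qed

end

context main
begin

lemma atz_ex: assumes z: "z \<in> B" shows "\<exists>i0. atz V E D bs cs \<alpha> m r Cs b M x z i0"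
proof -
  have zM: "z \<in> M" and zd: "gdist V E x z = 2" using z unfolding B_def Gam_def by auto
  obtain i0 where i0: "i0 < m" "M = insert z (row z i0)" using M_row[OF zM] by blast
  interpret A: atz V E D bs cs \<alpha> m r Cs b M x z i0
    by unfold_locales (use zM zd i0 in auto)
  show ?thesis using A.atz_axioms by (metis A.atz_axioms atz_def main_axioms)
qed

end

context main
begin

lemma finB: "finite B" unfolding B_def using Mfin by simp

lemma B_ne: "\<exists>z. z \<in> B"
proof -
  obtain z where "z \<in> M" "gdist V E x z = 2" using Mdist_ex by blast
  hence "z \<in> B" unfolding B_def Gam_def using MV by auto
  thus ?thesis by blast
qed

lemma cardB: "card B = \<alpha> * (b + 1) + 1"
proof -
  obtain z where z: "z \<in> B" using B_ne by blast
  then obtain i0 where "atz V E D bs cs \<alpha> m r Cs b M x z i0" using atz_ex by blast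
  thus ?thesis by (rule atz.card_B)
qed

lemma Bl_sub: "X \<in> Bl \<Longrightarrow> X \<subseteq> B \<and> card X = \<alpha> + 1"
proof -
  assume X: "X \<in> Bl"
  have "\<exists>l. X = l \<inter> B \<and> l \<in> Cs \<and> 2 \<le> card (l \<inter> B)" using X unfolding Bl_def by simp
  then obtain l where l: "X = l \<inter> B" "card (l \<inter> B) \<ge> 2" by blast
  have "X \<noteq> {}" using l by auto
  then obtain z where z: "z \<in> X" by blast
  have zB: "z \<in> B" using z l by blast
  then obtain i0 where "atz V E D bs cs \<alpha> m r Cs b M x z i0" using atz_ex by blast
  hence "card X = \<alpha> + 1" using atz.block_card[OF _ X z] by blast
  thus ?thesis using l by blast
qed

lemma Bl_fin: "finite Bl"
proof -
  have "Bl \<subseteq> Pow B" using Bl_sub by blast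
  thus ?thesis using finB by (meson finite_Pow_iff finite_subset)
qed

lemma pairs: assumes T: "T \<subseteq> B" "card T = 2" shows "card {X \<in> Bl. T \<subseteq> X} = 1"
proof -
  obtain u v where uv: "T = {u, v}" "u \<noteq> v" using T(2) by (meson card_2_iff)
  have uM: "u \<in> M" and vM: "v \<in> M" using T(1) uv unfolding B_def by auto
  have uV: "u \<in> V" and vV: "v \<in> V" and e: "E u v" using Mcl uM vM uv(2) unfolding is_clique_def by auto
  obtain l0 where l0: "l0 \<in> Cs" "u \<in> l0" "v \<in> l0"
    and un: "\<And>l. l \<in> Cs \<Longrightarrow> u \<in> l \<Longrightarrow> v \<in> l \<Longrightarrow> l = l0"
    using geom uV vV e unfolding geometric_wrt_def by metis
  have "{X \<in> Bl. T \<subseteq> X} = {l0 \<inter> B}"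
  proof
    show "{X \<in> Bl. T \<subseteq> X} \<subseteq> {l0 \<inter> B}"
    proof
      fix X assume X: "X \<in> {X \<in> Bl. T \<subseteq> X}"
      have "\<exists>l. X = l \<inter> B \<and> l \<in> Cs \<and> 2 \<le> card (l \<inter> B)" using X unfolding Bl_def by simp
      then obtain l where l: "X = l \<inter> B" "l \<in> Cs" by blast
      have "u \<in> l" "v \<in> l" using X l uv by auto
      hence "l = l0" using un l(2) by blast
      thus "X \<in> {l0 \<inter> B}" using l by simp
    qed
  next
    have TB: "T \<subseteq> l0 \<inter> B" using l0 uv T(1) by auto
    have "finite (l0 \<inter> B)" using finB by simp
    hence "card T \<le> card (l0 \<inter> B)" using TB card_mono by blast
    hence "2 \<le> card (l0 \<inter> B)" using T(2) by simp
    hence "\<exists>l. l0 \<inter> B = l \<inter> B \<and> l \<in> Cs \<and> 2 \<le> card (l \<inter> B)" using l0 by blast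
    hence "l0 \<inter> B \<in> Bl" unfolding Bl_def by simp
    thus "{l0 \<inter> B} \<subseteq> {X \<in> Bl. T \<subseteq> X}" using TB by blast
  qed
  thus ?thesis by simp
qed

lemma double_count: "card B * (b + 1) = card Bl * (\<alpha> + 1)"
proof -
  have "card B * (b + 1) = (\<Sum>z\<in>B. card {X \<in> Bl. z \<in> X})"
  proof -
    have "\<And>z. z \<in> B \<Longrightarrow> card {X \<in> Bl. z \<in> X} = b + 1"
    proof -
      fix z assume z: "z \<in> B"
      then obtain i0 where "atz V E D bs cs \<alpha> m r Cs b M x z i0" using atz_ex by blast
      thus "card {X \<in> Bl. z \<in> X} = b + 1" by (rule atz.card_blocks_z)
    qed
    thus ?thesis by simp
  qed
  also have "\<dots> = (\<Sum>z\<in>B. \<Sum>X\<in>Bl. if z \<in> X then 1 else 0)"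
  proof (rule sum.cong[OF refl])
    fix z
    have "(\<Sum>X\<in>Bl. if z \<in> X then 1 else 0) = card (Bl \<inter> {X. z \<in> X})" by (simp add: sum.If_cases Bl_fin)
    also have "Bl \<inter> {X. z \<in> X} = {X \<in> Bl. z \<in> X}" by blast
    finally show "card {X \<in> Bl. z \<in> X} = (\<Sum>X\<in>Bl. if z \<in> X then 1 else 0)" by simp
  qed
  also have "\<dots> = (\<Sum>X\<in>Bl. \<Sum>z\<in>B. if z \<in> X then 1 else 0)" by (rule sum.swap)
  also have "\<dots> = (\<Sum>X\<in>Bl. card X)"
  proof (rule sum.cong[OF refl])
    fix X assume X: "X \<in> Bl"
    have "(\<Sum>z\<in>B. if z \<in> X then 1 else 0) = card (B \<inter> X)" by (simp add: sum.If_cases finB)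
    also have "B \<inter> X = X" using Bl_sub[OF X] by blast
    finally show "(\<Sum>z\<in>B. if z \<in> X then 1 else (0::nat)) = card X" .
  qed
  also have "\<dots> = (\<Sum>X\<in>Bl. \<alpha> + 1)" by (rule sum.cong[OF refl]) (use Bl_sub in blast)
  finally show ?thesis by simp
qed

lemma design: "t_design 2 (\<alpha> * (b + 1) + 1) (\<alpha> + 1) 1 B Bl \<and> (\<alpha> + 1) dvd (b * (b + 1))"
proof
  show "t_design 2 (\<alpha> * (b + 1) + 1) (\<alpha> + 1) 1 B Bl"
    unfolding t_design_def using finB cardB Bl_sub pairs by blast
next
  have eq: "(\<alpha> * (b + 1) + 1) * (b + 1) = card Bl * (\<alpha> + 1)" using double_count cardB by simp
  have "(\<alpha> + 1) dvd card Bl * (\<alpha> + 1)" by (rule dvd_triv_right)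
  hence "(\<alpha> + 1) dvd ((\<alpha> * (b + 1) + 1) * (b + 1))" by (simp only: eq)
  moreover have "(\<alpha> * (b + 1) + 1) * (b + 1) + b * (b + 1) = (\<alpha> + 1) * ((b + 1) * (b + 1))"
    by (simp add: algebra_simps)
  ultimately show "(\<alpha> + 1) dvd (b * (b + 1))"
    by (metis dvd_add_right_iff dvd_triv_left)
qed

end

lemma qint_2: "qint b 2 = 1 + b" unfolding qint_def by (simp add: numeral_2_eq_2)
lemma qint_1: "qint b 1 = 1" unfolding qint_def by simp
lemma qint_Suc0: "qint b (Suc 0) = 1" unfolding qint_def by simp
lemma qint_ge3: assumes b: "(b::int) \<ge> 0" and D: "3 \<le> D" shows "qint b D \<ge> 1 + b + b^2"
proof -
  have "qint b 3 \<le> qint b D" unfolding qint_def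
    by (rule sum_mono2) (use D b in auto)
  moreover have "qint b 3 = 1 + b + b^2" unfolding qint_def by (simp add: numeral_3_eq_3 power2_eq_square)
  ultimately show ?thesis by simp
qed

theorem theorem28:
  fixes V :: "'a set" and E :: "'a \<Rightarrow> 'a \<Rightarrow> bool" and \<C> :: "'a set set"
    and D b \<alpha> \<beta> :: nat and M :: "'a set" and x :: 'a
  assumes cp: "classical_parameters V E D (int b) (int \<alpha>) (int \<beta>)"
    and b2: "b \<ge> 2" and \<alpha>1: "1 \<le> \<alpha>" and \<alpha>b: "\<alpha> \<le> b - 1" and D3: "D \<ge> 3"
    and geom: "geometric_wrt V E \<C>"
    and \<alpha>dvd: "\<alpha> dvd \<beta>"
    and loc: "\<forall>y\<in>V. local_is_ext_grid V E y \<alpha> (\<beta> div \<alpha>) (nat (qint (int b) D))"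
    and big: "int \<beta> > int \<alpha> * qint (int b) D"
    and asm: "assembly V E \<C> M"
    and xV: "x \<in> V" and xM: "set_dist V E x M = 2"
  shows "t_design 2 (\<alpha> * (b + 1) + 1) (\<alpha> + 1) 1 (Gam V E 2 x \<inter> M)
           {l \<inter> (Gam V E 2 x \<inter> M) | l. l \<in> \<C> \<and> card (l \<inter> (Gam V E 2 x \<inter> M)) \<ge> 2}
         \<and> (\<alpha> + 1) dvd (b * (b + 1))"
proof -
  obtain bs cs where dr: "distance_regular V E D bs cs"
    and bsF: "\<forall>i<D. int (bs i) = (qint (int b) D - qint (int b) i) * (int \<beta> - int \<alpha> * qint (int b) i)"
    and csF: "\<forall>i. 1 \<le> i \<and> i \<le> D \<longrightarrow> int (cs i) = qint (int b) i * (1 + int \<alpha> * qint (int b) (i - 1))"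
    using cp unfolding classical_parameters_def by blast
  define m where "m = \<beta> div \<alpha>"
  define r where "r = nat (qint (int b) D)"
  have q3: "qint (int b) D \<ge> 1 + int b + (int b)^2" using qint_ge3[OF _ D3] by simp
  have "(0::int) \<le> 1 + int b + (int b)^2" by simp
  hence "0 \<le> qint (int b) D" using q3 by linarith
  hence rq: "int r = qint (int b) D" unfolding r_def by simp
  have bm: "\<beta> = \<alpha> * m" unfolding m_def using \<alpha>dvd by simp
  have "int \<alpha> * int m > int \<alpha> * int r" using big bm rq by simp
  hence mr: "r < m" by (simp add: mult_less_cancel_left)
  have "int b ^ 2 \<ge> 1" using b2 by (simp add: one_le_power)
  hence hb: "b + 2 \<le> r" using q3 rq by linarith
  have r0: "0 < r" using hb by simp
  have c2: "cs 2 = (b + 1) * (\<alpha> + 1)"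
  proof -
    have "int (cs 2) = qint (int b) 2 * (1 + int \<alpha> * qint (int b) 1)" using csF D3 by simp
    also have "\<dots> = int ((b + 1) * (\<alpha> + 1))" by (simp add: qint_2 qint_1 qint_Suc0 algebra_simps)
    finally show ?thesis by (simp only: of_nat_eq_iff)
  qed
  have bb2: "bs 2 = (r - (b + 1)) * (\<alpha> * m - \<alpha> * (b + 1))"
  proof -
    have "int (bs 2) = (qint (int b) D - qint (int b) 2) * (int \<beta> - int \<alpha> * qint (int b) 2)"
      using bsF D3 by simp
    also have "\<dots> = (int r - (int b + 1)) * (int \<alpha> * int m - int \<alpha> * (int b + 1))"
      using rq bm by (simp add: qint_2 add.commute)
    also have "\<dots> = int ((r - (b + 1)) * (\<alpha> * m - \<alpha> * (b + 1)))"
    proof -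
      have "b + 1 \<le> r" using hb by simp
      moreover have "b + 1 \<le> m" using hb mr by simp
      hence "\<alpha> * (b + 1) \<le> \<alpha> * m" by (rule mult_le_mono2)
      ultimately have "int (r - (b + 1)) = int r - (int b + 1)" "int (\<alpha> * m - \<alpha> * (b + 1)) = int \<alpha> * int m - int \<alpha> * (int b + 1)"
        by (simp_all add: of_nat_diff algebra_simps)
      thus ?thesis by (simp only: of_nat_mult)
    qed
    finally show ?thesis by (simp only: of_nat_eq_iff)
  qed
  interpret main V E D bs cs \<alpha> m r \<C> b M x
  proof unfold_locales
    show "distance_regular V E D bs cs" by (rule dr)
    show "\<forall>y\<in>V. local_is_ext_grid V E y \<alpha> m r" using loc unfolding m_def r_def .
  qed (use \<alpha>1 mr r0 geom c2 bb2 D3 hb asm xV xM in auto)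
  have "t_design 2 (\<alpha> * (b + 1) + 1) (\<alpha> + 1) 1 B Bl \<and> (\<alpha> + 1) dvd (b * (b + 1))" by (rule design)
  thus ?thesis unfolding B_def Bl_def .
qed

end
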